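(* Let $X$ be an irreducible positive recurrent Markov chain on a countable state space $S$ with transition matrix $P$ and stationary distribution $\pi$. Fix a finite nonempty $K\subseteq S$ and finite sets $A_n\supseteq K$ with $A_n\nearrow S$. For each $n$ let $T_n=\inf\{j\ge1:X_j\notin A_n\}$, $T_K=\inf\{j\ge1:X_j\in K\}$, and assume the matrix $G_n(x,y)=P_x(X_{T_K}=y,\,T_K<T_n)$, $x,y\in K$, is irreducible. Let $u_n(x)=P_x(T_K<T_n)$ for $x\in A_n$, $S_n'=\{x\in A_n:u_n(x)>0\}$, and define the stochastic matrix $R_n$ on $S_n'$ by $R_n(x,y)=P(x,y)/u_n(x)$ for $x\in S_n'$, $y\in K$, and $R_n(x,y)=P(x,y)u_n(y)/u_n(x)$ for $x\in S'_n$, $y\in S'_n\setminus K$. Let $S_n''\supseteq K$ be the unique closed communicating class of $R_n$, and let $\pi^*_{3n}$ be the unique stationary distribution of $R_n$ restricted to $S_n''$, extended to $S$ by $\pi^*_{3n}(x)=0$ for $x\notin S_n''$. Then for each $x\in S$, $\pi^*_{3n}(x)\to\pi(x)$ as $n\to\infty$.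
   Context: $P_x$ denotes the law of the chain started at $x$. Under the irreducibility of $G_n$, $S_n'$ contains a single closed communicating class of $R_n$, which contains $K$, and $R_n$ restricted to it is irreducible; $R_n$ describes the dynamics of $X$ conditioned on $T_K<T_n$. *)

theory Defs
  imports "HOL-Analysis.Analysis"
begin

definition stochastic :: "('a \<Rightarrow> 'a \<Rightarrow> real) \<Rightarrow> bool" where
  "stochastic P \<longleftrightarrow> (\<forall>x y. P x y \<ge> 0) \<and> (\<forall>x. (P x has_sum 1) UNIV)"

definition irreducible_chain :: "('a \<Rightarrow> 'a \<Rightarrow> real) \<Rightarrow> bool" where
  "irreducible_chain P \<longleftrightarrow> (\<forall>x y. (x, y) \<in> {(a, b). P a b > 0}\<^sup>*)"

text \<open>Taboo probabilities: taboo P B j x y = P_x(X_j = y, X_i \<in> B for 1 <= i < j), j >= 1;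
  taboo P B 0 x y = 0.\<close>
fun taboo :: "('a \<Rightarrow> 'a \<Rightarrow> real) \<Rightarrow> 'a set \<Rightarrow> nat \<Rightarrow> 'a \<Rightarrow> 'a \<Rightarrow> real" where
  "taboo P B 0 x y = 0"
| "taboo P B (Suc 0) x y = P x y"
| "taboo P B (Suc (Suc j)) x y = infsum (\<lambda>z. P x z * taboo P B (Suc j) z y) B"

definition first_return :: "('a \<Rightarrow> 'a \<Rightarrow> real) \<Rightarrow> nat \<Rightarrow> 'a \<Rightarrow> real" where
  "first_return P j x = taboo P (UNIV - {x}) j x x"

text \<open>Positive recurrence: every state is recurrent (P_x(T_x < inf) = 1) and E_x[T_x] < inf.\<close>
definition positive_recurrent :: "('a \<Rightarrow> 'a \<Rightarrow> real) \<Rightarrow> bool" where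
  "positive_recurrent P \<longleftrightarrow>
     (\<forall>x. (\<lambda>j. first_return P j x) sums 1 \<and> summable (\<lambda>j. real j * first_return P j x))"

definition stationary_distribution :: "('a \<Rightarrow> 'a \<Rightarrow> real) \<Rightarrow> ('a \<Rightarrow> real) \<Rightarrow> bool" where
  "stationary_distribution P \<pi> \<longleftrightarrow> (\<forall>x. \<pi> x \<ge> 0) \<and> (\<pi> has_sum 1) UNIV \<and>
     (\<forall>y. ((\<lambda>x. \<pi> x * P x y) has_sum \<pi> y) UNIV)"

text \<open>G_n(x,y) = P_x(X_{T_K} = y, T_K < T_n) for y in K, where A is the finite set A_n.
  The event {X_{T_K} = y, T_K < T_n} is the disjoint union over j >= 1 of
  {X_j = y, X_i \<in> A - K for 1 <= i < j}.\<close>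
definition Gmat :: "('a \<Rightarrow> 'a \<Rightarrow> real) \<Rightarrow> 'a set \<Rightarrow> 'a set \<Rightarrow> 'a \<Rightarrow> 'a \<Rightarrow> real" where
  "Gmat P K A x y = (if y \<in> K then (\<Sum>j. taboo P (A - K) j x y) else 0)"

definition uhit :: "('a \<Rightarrow> 'a \<Rightarrow> real) \<Rightarrow> 'a set \<Rightarrow> 'a set \<Rightarrow> 'a \<Rightarrow> real" where
  "uhit P K A x = (\<Sum>y\<in>K. Gmat P K A x y)"

definition irreducible_on :: "'a set \<Rightarrow> ('a \<Rightarrow> 'a \<Rightarrow> real) \<Rightarrow> bool" where
  "irreducible_on K G \<longleftrightarrow> (\<forall>x\<in>K. \<forall>y\<in>K. (x, y) \<in> {(a, b). a \<in> K \<and> b \<in> K \<and> G a b > 0}\<^sup>+)"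

definition Sprime :: "('a \<Rightarrow> 'a \<Rightarrow> real) \<Rightarrow> 'a set \<Rightarrow> 'a set \<Rightarrow> 'a set" where
  "Sprime P K A = {x \<in> A. uhit P K A x > 0}"

definition Rmat :: "('a \<Rightarrow> 'a \<Rightarrow> real) \<Rightarrow> 'a set \<Rightarrow> 'a set \<Rightarrow> 'a \<Rightarrow> 'a \<Rightarrow> real" where
  "Rmat P K A x y =
     (if x \<in> Sprime P K A then
        (if y \<in> K then P x y / uhit P K A x
         else if y \<in> Sprime P K A then P x y * uhit P K A y / uhit P K A x
         else 0)
      else 0)"

definition closed_comm_class :: "'a set \<Rightarrow> ('a \<Rightarrow> 'a \<Rightarrow> real) \<Rightarrow> 'a set \<Rightarrow> bool" where
  "closed_comm_class S M C \<longleftrightarrow> C \<noteq> {} \<and> C \<subseteq> S \<and>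
     (\<forall>x\<in>C. \<forall>y\<in>C. (x, y) \<in> {(a, b). a \<in> S \<and> b \<in> S \<and> M a b > 0}\<^sup>*) \<and>
     (\<forall>x\<in>C. \<forall>y\<in>S. (x, y) \<in> {(a, b). a \<in> S \<and> b \<in> S \<and> M a b > 0}\<^sup>* \<longrightarrow> y \<in> C)"

definition stationary_on :: "'a set \<Rightarrow> ('a \<Rightarrow> 'a \<Rightarrow> real) \<Rightarrow> ('a \<Rightarrow> real) \<Rightarrow> bool" where
  "stationary_on C M q \<longleftrightarrow> (\<forall>x. q x \<ge> 0) \<and> (\<forall>x. x \<notin> C \<longrightarrow> q x = 0) \<and>
     (\<Sum>x\<in>C. q x) = 1 \<and> (\<forall>y\<in>C. (\<Sum>x\<in>C. q x * M x y) = q y)"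

end

theory Submission
  imports Defs
begin

lemma summable_on_sum_real:
  fixes f :: "'i \<Rightarrow> 'b \<Rightarrow> real"
  assumes "finite I" "\<And>i. i \<in> I \<Longrightarrow> f i summable_on S"
  shows "(\<lambda>x. \<Sum>i\<in>I. f i x) summable_on S"
  using assms
proof (induction I rule: finite_induct)
  case empty then show ?case by simp
next
  case (insert a I)
  have "(\<lambda>x. f a x + (\<Sum>i\<in>I. f i x)) summable_on S"
    by (rule summable_on_add) (use insert in auto)
  then show ?case using insert by simp
qed

lemma infsum_sum_swap:
  fixes f :: "'i \<Rightarrow> 'b \<Rightarrow> real"
  assumes "finite I" "\<And>i. i \<in> I \<Longrightarrow> f i summable_on S"
  shows "infsum (\<lambda>x. \<Sum>i\<in>I. f i x) S = (\<Sum>i\<in>I. infsum (f i) S)"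
  using assms
proof (induction I rule: finite_induct)
  case empty then show ?case by simp
next
  case (insert a I)
  have s: "(\<lambda>x. \<Sum>i\<in>I. f i x) summable_on S" using insert by (auto intro: summable_on_sum_real)
  have fa: "f a summable_on S" using insert by auto
  have "infsum (\<lambda>x. \<Sum>i\<in>insert a I. f i x) S = infsum (\<lambda>x. f a x + (\<Sum>i\<in>I. f i x)) S"
    using insert by simp
  also have "\<dots> = infsum (f a) S + infsum (\<lambda>x. \<Sum>i\<in>I. f i x) S"
    by (rule infsum_add[OF fa s])
  also have "\<dots> = infsum (f a) S + (\<Sum>i\<in>I. infsum (f i) S)" using insert by auto
  finally show ?case using insert by simp
qed

lemma infsum_diff_real:
  fixes f g :: "'b \<Rightarrow> real"
  assumes "f summable_on S" "g summable_on S"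
  shows "infsum (\<lambda>x. f x - g x) S = infsum f S - infsum g S"
proof -
  have "(\<lambda>x. - g x) summable_on S" using assms(2) by (simp add: summable_on_uminus)
  then have "infsum (\<lambda>x. f x + - g x) S = infsum f S + infsum (\<lambda>x. - g x) S"
    by (rule infsum_add[OF assms(1)])
  then show ?thesis by (simp add: infsum_uminus)
qed

lemma summable_on_diff_real:
  fixes f g :: "'b \<Rightarrow> real"
  assumes "f summable_on S" "g summable_on S"
  shows "(\<lambda>x. f x - g x) summable_on S"
proof -
  have "(\<lambda>x. - g x) summable_on S" using assms(2) by (simp add: summable_on_uminus)
  from summable_on_add[OF assms(1) this] show ?thesis by simp
qed

lemma summable_on_nonneg_le:
  fixes f g :: "'b \<Rightarrow> real"
  assumes "g summable_on S" "\<And>x. x \<in> S \<Longrightarrow> 0 \<le> f x" "\<And>x. x \<in> S \<Longrightarrow> f x \<le> g x"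
  shows "f summable_on S"
  using summable_on_comparison_test[OF assms(1)] assms by auto

lemma summable_on_abs_le:
  fixes f g :: "'b \<Rightarrow> real"
  assumes "g summable_on S" "\<And>x. x \<in> S \<Longrightarrow> \<bar>f x\<bar> \<le> g x"
  shows "f summable_on S"
proof -
  have "(\<lambda>x. norm (f x)) summable_on S"
    by (rule Infinite_Sum.abs_summable_on_comparison_test'[OF assms(1)]) (use assms(2) in auto)
  then show ?thesis
    using summable_on_iff_abs_summable_on_real by blast
qed

lemma infsum_abs_le:
  fixes f g :: "'b \<Rightarrow> real"
  assumes "g summable_on S" "\<And>x. x \<in> S \<Longrightarrow> \<bar>f x\<bar> \<le> g x"
  shows "\<bar>infsum f S\<bar> \<le> infsum g S"
proof -
  have fs: "f summable_on S" by (rule summable_on_abs_le[OF assms])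
  have "infsum f S \<le> infsum g S"
    by (rule infsum_mono[OF fs assms(1)]) (use assms(2) in force)
  moreover have "infsum (\<lambda>x. - f x) S \<le> infsum g S"
    by (rule infsum_mono) (use fs assms in \<open>auto simp: summable_on_uminus abs_le_iff\<close>)
  ultimately show ?thesis by (simp add: infsum_uminus)
qed

lemma infsum_dominated_convergence:
  fixes f :: "nat \<Rightarrow> 'b \<Rightarrow> real"
  assumes g: "g summable_on S"
    and bound: "\<And>n x. x \<in> S \<Longrightarrow> \<bar>f n x\<bar> \<le> g x"
    and lim: "\<And>x. x \<in> S \<Longrightarrow> (\<lambda>n. f n x) \<longlonglongrightarrow> h x"
  shows "(\<lambda>n. infsum (f n) S) \<longlonglongrightarrow> infsum h S"
proof (rule LIMSEQ_I)
  fix r :: real assume r: "r > 0"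
  define e where "e = r / 4"
  have e: "e > 0" using r by (simp add: e_def)
  have hb: "\<bar>h x\<bar> \<le> g x" if "x \<in> S" for x
  proof -
    have "(\<lambda>n. \<bar>f n x\<bar>) \<longlonglongrightarrow> \<bar>h x\<bar>" using lim[OF that] by (rule tendsto_rabs)
    then show ?thesis by (rule LIMSEQ_le_const2) (use bound that in auto)
  qed
  obtain F where F: "finite F" "F \<subseteq> S" "dist (sum g F) (infsum g S) \<le> e"
    using infsum_finite_approximation[OF g e] by blast
  have gS: "g summable_on (S - F)" using summable_on_subset_banach[OF g] by auto
  have tail: "infsum g (S - F) \<le> e"
  proof -
    have "infsum g (S - F) = infsum g S - infsum g F"
      by (rule infsum_Diff[OF g]) (use F in auto)
    then show ?thesis using F by (auto simp: dist_real_def)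
  qed
  have approx: "\<bar>infsum \<phi> S - sum \<phi> F\<bar> \<le> e" if "\<And>x. x \<in> S \<Longrightarrow> \<bar>\<phi> x\<bar> \<le> g x" for \<phi>
  proof -
    have ps: "\<phi> summable_on S" by (rule summable_on_abs_le[OF g that])
    have "infsum \<phi> (S - F) = infsum \<phi> S - infsum \<phi> F"
      by (rule infsum_Diff[OF ps]) (use F in auto)
    then have "infsum \<phi> S - sum \<phi> F = infsum \<phi> (S - F)" using F by simp
    moreover have "\<bar>infsum \<phi> (S - F)\<bar> \<le> infsum g (S - F)"
      by (rule infsum_abs_le[OF gS]) (use that in auto)
    ultimately show ?thesis using tail by simp
  qed
  have "(\<lambda>n. sum (f n) F) \<longlonglongrightarrow> sum h F"
    by (rule tendsto_sum) (use lim F in auto)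
  then obtain N where N: "\<And>n. n \<ge> N \<Longrightarrow> \<bar>sum (f n) F - sum h F\<bar> < e"
    using LIMSEQ_D[OF _ e] by (metis real_norm_def)
  show "\<exists>no. \<forall>n\<ge>no. norm (infsum (f n) S - infsum h S) < r"
  proof (intro exI allI impI)
    fix n assume n: "n \<ge> N"
    have a1: "\<bar>infsum (f n) S - sum (f n) F\<bar> \<le> e" by (rule approx) (use bound in auto)
    have a2: "\<bar>infsum h S - sum h F\<bar> \<le> e" by (rule approx) (use hb in auto)
    have "\<bar>infsum (f n) S - infsum h S\<bar> < 3 * e" using a1 a2 N[OF n] by linarith
    then show "norm (infsum (f n) S - infsum h S) < r" using e by (simp add: e_def)
  qed
qed

locale mc =
  fixes P :: "'a::countable \<Rightarrow> 'a \<Rightarrow> real"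
  assumes stoch: "stochastic P"
begin

lemma P_nonneg: "0 \<le> P x y"
  using stoch unfolding stochastic_def by auto

lemma P_has_sum: "(P x has_sum 1) UNIV"
  using stoch unfolding stochastic_def by auto

lemma P_summable: "P x summable_on C"
  using summable_on_subset_banach[of "P x" UNIV C] P_has_sum has_sum_imp_summable by blast

lemma P_infsum_UNIV: "infsum (P x) UNIV = 1"
  using P_has_sum infsumI by blast

lemma P_le1: "P x y \<le> 1"
  using finite_sum_le_has_sum[OF P_has_sum, of "{y}" x] P_nonneg by auto

lemma P_infsum_le1: "infsum (P x) C \<le> 1"
  using infsum_mono2[of "P x" C UNIV] P_summable P_nonneg P_infsum_UNIV by auto

lemma P_infsum_nonneg: "0 \<le> infsum (P x) C"
  by (rule infsum_nonneg) (rule P_nonneg)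

lemma summable_Pf:
  assumes "\<And>z. z \<in> C \<Longrightarrow> \<bar>f z\<bar> \<le> c"
  shows "(\<lambda>z. P x z * f z) summable_on C"
proof (rule summable_on_abs_le)
  show "(\<lambda>z. c * P x z) summable_on C" by (rule summable_on_cmult_right[OF P_summable])
  fix z assume "z \<in> C"
  then show "\<bar>P x z * f z\<bar> \<le> c * P x z"
    using assms P_nonneg by (simp add: abs_mult mult_right_mono mult.commute)
qed

lemma infsum_Pf_le:
  assumes "\<And>z. z \<in> C \<Longrightarrow> 0 \<le> f z" "\<And>z. z \<in> C \<Longrightarrow> f z \<le> 1"
  shows "infsum (\<lambda>z. P x z * f z) C \<le> 1" "0 \<le> infsum (\<lambda>z. P x z * f z) C"
proof -
  have s: "(\<lambda>z. P x z * f z) summable_on C" by (rule summable_Pf[of C f 1]) (use assms in auto)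
  have "infsum (\<lambda>z. P x z * f z) C \<le> infsum (P x) C"
    by (rule infsum_mono[OF s P_summable]) (use assms P_nonneg in \<open>auto intro: mult_left_le\<close>)
  then show "infsum (\<lambda>z. P x z * f z) C \<le> 1" using P_infsum_le1 by (rule order_trans)
  show "0 \<le> infsum (\<lambda>z. P x z * f z) C"
    by (rule infsum_nonneg) (use assms P_nonneg in auto)
qed

lemma taboo_Suc_pos: "0 < j \<Longrightarrow> taboo P C (Suc j) x y = infsum (\<lambda>z. P x z * taboo P C j z y) C"
  by (cases j) auto

lemma taboo_bounds: "0 \<le> taboo P C j x y \<and> taboo P C j x y \<le> 1"
proof (induction j arbitrary: x)
  case 0 then show ?case by simp
next
  case (Suc j)
  show ?case
  proof (cases j)
    case 0 then show ?thesis using P_nonneg P_le1 by simp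
  next
    case (Suc i)
    then have "taboo P C (Suc j) x y = infsum (\<lambda>z. P x z * taboo P C j z y) C" by simp
    then show ?thesis using infsum_Pf_le[of C "\<lambda>z. taboo P C j z y" x] Suc.IH by auto
  qed
qed

lemma taboo_nonneg: "0 \<le> taboo P C j x y" using taboo_bounds by blast
lemma taboo_le1: "taboo P C j x y \<le> 1" using taboo_bounds by blast

lemma taboo_summable: "(\<lambda>z. P x z * taboo P C j z y) summable_on D"
  by (rule summable_Pf[of D _ 1]) (use taboo_bounds in auto)

lemma taboo_ge_single:
  assumes "z \<in> C"
  shows "P x z * taboo P C (Suc j) z y \<le> taboo P C (Suc (Suc j)) x y"
proof -
  have "sum (\<lambda>z. P x z * taboo P C (Suc j) z y) {z} \<le> infsum (\<lambda>z. P x z * taboo P C (Suc j) z y) C"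
    by (rule finite_sum_le_infsum[OF taboo_summable]) (use assms P_nonneg taboo_nonneg in auto)
  then show ?thesis by simp
qed

lemma taboo_mono_set:
  assumes "C \<subseteq> D"
  shows "taboo P C j x y \<le> taboo P D j x y"
proof (induction j arbitrary: x)
  case 0 then show ?case by simp
next
  case (Suc j)
  show ?case
  proof (cases j)
    case 0 then show ?thesis by simp
  next
    case (Suc i)
    have "infsum (\<lambda>z. P x z * taboo P C j z y) C \<le> infsum (\<lambda>z. P x z * taboo P D j z y) D"
      by (rule infsum_mono_neutral[OF taboo_summable taboo_summable])
        (use assms Suc.IH P_nonneg taboo_nonneg in \<open>auto intro: mult_left_mono\<close>)
    then show ?thesis using Suc by simp
  qed
qed

subsection \<open>Survival probabilities\<close>

fun surv :: "'a set \<Rightarrow> nat \<Rightarrow> 'a \<Rightarrow> real" where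
  "surv C 0 x = 1"
| "surv C (Suc m) x = infsum (\<lambda>z. P x z * surv C m z) C"

lemma surv_bounds: "0 \<le> surv C m x \<and> surv C m x \<le> 1"
proof (induction m arbitrary: x)
  case 0 then show ?case by simp
next
  case (Suc m)
  then show ?case using infsum_Pf_le[of C "\<lambda>z. surv C m z" x] by auto
qed

lemma surv_nonneg: "0 \<le> surv C m x" using surv_bounds by blast
lemma surv_le1: "surv C m x \<le> 1" using surv_bounds by blast

lemma surv_summable: "(\<lambda>z. P x z * surv C m z) summable_on D"
  by (rule summable_Pf[of D _ 1]) (use surv_bounds in auto)

lemma surv_mono_set:
  assumes "C \<subseteq> D"
  shows "surv C m x \<le> surv D m x"
proof (induction m arbitrary: x)
  case 0 then show ?case by simp
next
  case (Suc m)
  have "infsum (\<lambda>z. P x z * surv C m z) C \<le> infsum (\<lambda>z. P x z * surv D m z) D"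
    by (rule infsum_mono_neutral[OF surv_summable surv_summable])
      (use assms Suc.IH P_nonneg surv_nonneg in \<open>auto intro: mult_left_mono\<close>)
  then show ?case by simp
qed

lemma taboo_le_surv: "taboo P C (Suc m) x y \<le> surv C m x"
proof (induction m arbitrary: x)
  case 0 then show ?case using P_le1 by simp
next
  case (Suc m)
  have "infsum (\<lambda>z. P x z * taboo P C (Suc m) z y) C \<le> infsum (\<lambda>z. P x z * surv C m z) C"
    by (rule infsum_mono[OF taboo_summable surv_summable])
      (use Suc.IH P_nonneg in \<open>auto intro: mult_left_mono\<close>)
  then show ?case by simp
qed

lemma surv_markov:
  assumes "x \<in> C"
  shows "taboo P C (Suc j) k x * surv C m x \<le> surv C (Suc j + m) k"
proof (induction j arbitrary: k)
  case 0
  have "sum (\<lambda>z. P k z * surv C m z) {x} \<le> infsum (\<lambda>z. P k z * surv C m z) C"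
    by (rule finite_sum_le_infsum[OF surv_summable]) (use assms P_nonneg surv_nonneg in auto)
  then show ?case by simp
next
  case (Suc j)
  have "taboo P C (Suc (Suc j)) k x * surv C m x
        = infsum (\<lambda>z. P k z * taboo P C (Suc j) z x * surv C m x) C"
    using infsum_cmult_left'[where f="\<lambda>z. P k z * taboo P C (Suc j) z x" and A=C and c="surv C m x"] by simp
  also have "\<dots> \<le> infsum (\<lambda>z. P k z * surv C (Suc j + m) z) C"
  proof (rule infsum_mono)
    show "(\<lambda>z. P k z * taboo P C (Suc j) z x * surv C m x) summable_on C"
      using summable_on_cmult_left[OF taboo_summable] by blast
    show "(\<lambda>z. P k z * surv C (Suc j + m) z) summable_on C" by (rule surv_summable)
    fix z show "P k z * taboo P C (Suc j) z x * surv C m x \<le> P k z * surv C (Suc j + m) z"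
      using Suc.IH[of z] P_nonneg by (simp add: mult.assoc mult_left_mono)
  qed
  also have "\<dots> = surv C (Suc (Suc j) + m) k" by simp
  finally show ?case .
qed

lemma surv_complement:
  assumes fin: "finite (- C)"
  shows "1 - surv C m x = (\<Sum>j\<in>{1..m}. \<Sum>y\<in>-C. taboo P C j x y)"
proof (induction m arbitrary: x)
  case 0 then show ?case by simp
next
  case (Suc m)
  have split: "infsum (P x) UNIV = infsum (P x) C + sum (P x) (- C)"
    using infsum_Un_disjoint[where f="P x" and A=C and B="-C", OF P_summable P_summable] fin by simp
  have s1: "(\<lambda>z. P x z * surv C m z) summable_on C" by (rule surv_summable)
  have "1 - surv C (Suc m) x = infsum (P x) C + sum (P x) (- C) - infsum (\<lambda>z. P x z * surv C m z) C"
    using split P_infsum_UNIV by simp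
  also have "\<dots> = sum (P x) (- C) + infsum (\<lambda>z. P x z - P x z * surv C m z) C"
    using infsum_diff_real[OF P_summable s1] by simp
  also have "infsum (\<lambda>z. P x z - P x z * surv C m z) C
      = infsum (\<lambda>z. \<Sum>j\<in>{1..m}. \<Sum>y\<in>-C. P x z * taboo P C j z y) C"
  proof (rule infsum_cong)
    fix z assume "z \<in> C"
    have "P x z - P x z * surv C m z = P x z * (1 - surv C m z)" by (simp add: right_diff_distrib)
    also have "\<dots> = (\<Sum>j\<in>{1..m}. \<Sum>y\<in>-C. P x z * taboo P C j z y)"
      by (simp only: Suc.IH sum_distrib_left)
    finally show "P x z - P x z * surv C m z = (\<Sum>j\<in>{1..m}. \<Sum>y\<in>-C. P x z * taboo P C j z y)" .
  qed
  also have "\<dots> = (\<Sum>j\<in>{1..m}. infsum (\<lambda>z. \<Sum>y\<in>-C. P x z * taboo P C j z y) C)"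
    by (rule infsum_sum_swap) (auto intro!: summable_on_sum_real fin taboo_summable)
  also have "\<dots> = (\<Sum>j\<in>{1..m}. \<Sum>y\<in>-C. infsum (\<lambda>z. P x z * taboo P C j z y) C)"
    by (rule sum.cong[OF refl], rule infsum_sum_swap) (auto intro!: fin taboo_summable)
  also have "\<dots> = (\<Sum>j\<in>{1..m}. \<Sum>y\<in>-C. taboo P C (Suc j) x y)"
    by (rule sum.cong[OF refl], rule sum.cong[OF refl]) (simp add: taboo_Suc_pos)
  finally have "1 - surv C (Suc m) x = sum (P x) (- C) + (\<Sum>j\<in>{1..m}. \<Sum>y\<in>-C. taboo P C (Suc j) x y)" .
  also have "\<dots> = (\<Sum>j\<in>{1..Suc m}. \<Sum>y\<in>-C. taboo P C j x y)"
  proof -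
    have "(\<Sum>j\<in>{1..Suc m}. \<Sum>y\<in>-C. taboo P C j x y) = (\<Sum>y\<in>-C. taboo P C 1 x y) + (\<Sum>j\<in>{Suc 1..Suc m}. \<Sum>y\<in>-C. taboo P C j x y)"
      by (simp add: sum.atLeast_Suc_atMost)
    also have "(\<Sum>j\<in>{Suc 1..Suc m}. \<Sum>y\<in>-C. taboo P C j x y) = (\<Sum>j\<in>{1..m}. \<Sum>y\<in>-C. taboo P C (Suc j) x y)"
      by (rule sum.shift_bounds_cl_Suc_ivl)
    finally show ?thesis by simp
  qed
  finally show ?case .
qed

end

lemma sum_1_m_lessThan:
  fixes f :: "nat \<Rightarrow> real"
  assumes "f 0 = 0"
  shows "(\<Sum>j\<in>{1..m}. f j) = (\<Sum>j<Suc m. f j)"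
proof -
  have "(\<Sum>j<Suc m. f j) = (\<Sum>j\<in>{0..m}. f j)" by (simp add: atLeast0AtMost lessThan_Suc_atMost)
  also have "\<dots> = f 0 + (\<Sum>j\<in>{Suc 0..m}. f j)" by (simp add: sum.atLeast_Suc_atMost)
  finally show ?thesis using assms by simp
qed

locale chain = mc P for P :: "'a::countable \<Rightarrow> 'a \<Rightarrow> real" +
  fixes \<pi> :: "'a \<Rightarrow> real" and K :: "'a set"
  assumes irr: "irreducible_chain P"
    and posrec: "positive_recurrent P"
    and stat: "stationary_distribution P \<pi>"
    and finK: "finite K" and Kne: "K \<noteq> {}"
begin

subsection \<open>Recurrence\<close>

lemma return_surv_tendsto: "(\<lambda>m. surv (UNIV - {k}) m k) \<longlonglongrightarrow> 0"
proof -
  have fin: "finite (- (UNIV - {k}))" by simp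
  have eq: "1 - surv (UNIV - {k}) m k = (\<Sum>j<Suc m. first_return P j k)" for m
  proof -
    have "1 - surv (UNIV - {k}) m k = (\<Sum>j\<in>{1..m}. \<Sum>y\<in>-(UNIV - {k}). taboo P (UNIV - {k}) j k y)"
      by (rule surv_complement[OF fin])
    also have "\<dots> = (\<Sum>j\<in>{1..m}. first_return P j k)" by (simp add: first_return_def)
    also have "\<dots> = (\<Sum>j<Suc m. first_return P j k)"
      by (rule sum_1_m_lessThan) (simp add: first_return_def)
    finally show ?thesis .
  qed
  have "(\<lambda>j. first_return P j k) sums 1" using posrec unfolding positive_recurrent_def by auto
  then have "(\<lambda>m. \<Sum>j<m. first_return P j k) \<longlonglongrightarrow> 1" by (simp add: sums_def)
  then have "(\<lambda>m. \<Sum>j<Suc m. first_return P j k) \<longlonglongrightarrow> 1" by (rule LIMSEQ_Suc)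
  then have "(\<lambda>m. 1 - surv (UNIV - {k}) m k) \<longlonglongrightarrow> 1" using eq by simp
  then have "(\<lambda>m. 1 - (1 - surv (UNIV - {k}) m k)) \<longlonglongrightarrow> 1 - 1" by (intro tendsto_intros)
  then show ?thesis by simp
qed

lemma reach_taboo:
  assumes "x \<noteq> k"
  shows "\<exists>j. 0 < taboo P (UNIV - {k}) (Suc j) k x"
proof -
  define E where "E = {(a, b). P a b > 0}"
  define C where "C = UNIV - {k}"
  have kx: "(k, x) \<in> E\<^sup>*" using irr unfolding irreducible_chain_def E_def by auto
  have main: "a = x \<or> (\<exists>j. 0 < taboo P C (Suc j) a x) \<or> (\<exists>j. 0 < taboo P C (Suc j) k x)"
    if "(a, x) \<in> E\<^sup>*" for a
    using that
  proof (induction rule: converse_rtrancl_induct)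
    case base then show ?case by simp
  next
    case (step a b)
    have Pab: "P a b > 0" using step.hyps(1) by (simp add: E_def)
    show ?case
    proof (cases "b = x")
      case True
      then have "0 < taboo P C (Suc 0) a x" using Pab by simp
      then show ?thesis by blast
    next
      case False
      then consider (i) j where "0 < taboo P C (Suc j) b x" | (ii) j where "0 < taboo P C (Suc j) k x"
        using step.IH by auto
      then show ?thesis
      proof cases
        case (i j)
        show ?thesis
        proof (cases "b = k")
          case True then show ?thesis using i by blast
        next
          case False
          then have "b \<in> C" by (simp add: C_def)
          then have "P a b * taboo P C (Suc j) b x \<le> taboo P C (Suc (Suc j)) a x"
            by (rule taboo_ge_single)
          moreover have "0 < P a b * taboo P C (Suc j) b x" using Pab i by simp
          ultimately show ?thesis by (metis less_le_trans)
        qed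
      next
        case (ii j) then show ?thesis by blast
      qed
    qed
  qed
  from main[OF kx] show ?thesis using assms by (auto simp: C_def)
qed


lemma surv_single_tendsto: "(\<lambda>m. surv (UNIV - {k}) m x) \<longlonglongrightarrow> 0"
proof (cases "x = k")
  case True then show ?thesis using return_surv_tendsto by simp
next
  case False
  obtain j where tpos: "0 < taboo P (UNIV - {k}) (Suc j) k x" using reach_taboo[OF False] by blast
  define t where "t = taboo P (UNIV - {k}) (Suc j) k x"
  have xC: "x \<in> UNIV - {k}" using False by simp
  have le: "surv (UNIV - {k}) m x \<le> surv (UNIV - {k}) (m + Suc j) k / t" for m
  proof -
    have "t * surv (UNIV - {k}) m x \<le> surv (UNIV - {k}) (Suc j + m) k"
      unfolding t_def by (rule surv_markov[OF xC])
    then show ?thesis using tpos by (simp add: t_def field_simps add.commute)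
  qed
  have "(\<lambda>m. surv (UNIV - {k}) (m + Suc j) k) \<longlonglongrightarrow> 0"
    using LIMSEQ_ignore_initial_segment[OF return_surv_tendsto] by blast
  then have lim: "(\<lambda>m. surv (UNIV - {k}) (m + Suc j) k / t) \<longlonglongrightarrow> 0"
    by (rule tendsto_divide_zero)
  have ev1: "\<forall>\<^sub>F m in sequentially. 0 \<le> surv (UNIV - {k}) m x" by (simp add: surv_nonneg)
  have ev2: "\<forall>\<^sub>F m in sequentially. surv (UNIV - {k}) m x \<le> surv (UNIV - {k}) (m + Suc j) k / t"
    by (rule always_eventually, rule allI, rule le)
  show ?thesis by (rule real_tendsto_sandwich[OF ev1 ev2 tendsto_const lim])
qed

lemma surv_K_tendsto: "(\<lambda>m. surv (UNIV - K) m x) \<longlonglongrightarrow> 0"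
proof -
  obtain k where k: "k \<in> K" using Kne by blast
  have "surv (UNIV - K) m x \<le> surv (UNIV - {k}) m x" for m
    by (rule surv_mono_set) (use k in auto)
  then show ?thesis
    by (intro real_tendsto_sandwich[OF _ _ tendsto_const surv_single_tendsto[of k x]])
       (auto simp: surv_nonneg)
qed

abbreviation tau :: "nat \<Rightarrow> 'a \<Rightarrow> 'a \<Rightarrow> real" where
  "tau j x y \<equiv> taboo P (UNIV - K) j x y"

lemma hit_partial: "(\<Sum>j<Suc m. \<Sum>y\<in>K. tau j x y) = 1 - surv (UNIV - K) m x"
proof -
  have fin: "finite (- (UNIV - K))" using finK by simp
  have "1 - surv (UNIV - K) m x = (\<Sum>j\<in>{1..m}. \<Sum>y\<in>-(UNIV - K). tau j x y)"
    by (rule surv_complement[OF fin])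
  also have "\<dots> = (\<Sum>j\<in>{1..m}. \<Sum>y\<in>K. tau j x y)" by simp
  also have "\<dots> = (\<Sum>j<Suc m. \<Sum>y\<in>K. tau j x y)" by (rule sum_1_m_lessThan) simp
  finally show ?thesis by simp
qed

lemma hit_sums: "(\<lambda>j. \<Sum>y\<in>K. tau j x y) sums 1"
proof -
  have "(\<lambda>m. 1 - surv (UNIV - K) m x) \<longlonglongrightarrow> 1 - 0"
    by (intro tendsto_intros surv_K_tendsto)
  then have "(\<lambda>m. \<Sum>j<Suc m. \<Sum>y\<in>K. tau j x y) \<longlonglongrightarrow> 1" by (simp only: hit_partial) simp
  then have "(\<lambda>m. \<Sum>j<m. \<Sum>y\<in>K. tau j x y) \<longlonglongrightarrow> 1" by (rule LIMSEQ_imp_Suc)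
  then show ?thesis by (simp add: sums_def)
qed

lemma tau_toK_summable:
  assumes "y \<in> K"
  shows "summable (\<lambda>j. tau j x y)"
proof (rule summableI_nonneg_bounded)
  show "0 \<le> tau j x y" for j by (rule taboo_nonneg)
  fix n
  have "(\<Sum>i<n. tau i x y) \<le> (\<Sum>i<n. \<Sum>y'\<in>K. tau i x y')"
    by (rule sum_mono, rule member_le_sum) (use assms finK taboo_nonneg in auto)
  also have "\<dots> \<le> 1"
    using sum_le_suminf[OF sums_summable[OF hit_sums], of "{..<n}"] sums_unique[OF hit_sums]
    by (auto intro: sum_nonneg taboo_nonneg)
  finally show "(\<Sum>i<n. tau i x y) \<le> 1" .
qed

lemma tau_toK_sum: "(\<Sum>y\<in>K. suminf (\<lambda>j. tau j x y)) = 1"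
proof -
  have "(\<Sum>y\<in>K. suminf (\<lambda>j. tau j x y)) = suminf (\<lambda>j. \<Sum>y\<in>K. tau j x y)"
    by (rule suminf_sum[symmetric]) (rule tau_toK_summable)
  also have "\<dots> = 1" using hit_sums sums_unique by metis
  finally show ?thesis .
qed

end

context chain begin

lemma pi_nonneg: "0 \<le> \<pi> x"
  using stat unfolding stationary_distribution_def by auto

lemma pi_has_sum: "(\<pi> has_sum 1) UNIV"
  using stat unfolding stationary_distribution_def by auto

lemma pi_summable: "\<pi> summable_on S"
  using summable_on_subset_banach[of \<pi> UNIV S] pi_has_sum has_sum_imp_summable by blast

lemma pi_stat: "((\<lambda>x. \<pi> x * P x y) has_sum \<pi> y) UNIV"
  using stat unfolding stationary_distribution_def by auto

lemma pi_ge_single: "\<pi> a * P a b \<le> \<pi> b"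
  using finite_sum_le_has_sum[OF pi_stat, of "{a}" b] pi_nonneg P_nonneg by auto

lemma pi_pos: "0 < \<pi> x"
proof -
  obtain x0 where x0: "0 < \<pi> x0"
  proof (rule ccontr)
    assume "\<not> thesis"
    then have "\<forall>x. \<pi> x \<le> 0" using that by (meson not_le)
    then have "\<forall>x. \<pi> x = 0" using pi_nonneg by (simp add: order_antisym)
    then have "\<pi> = (\<lambda>_. 0)" by auto
    then have "(\<pi> has_sum 0) UNIV" by simp
    then show False using pi_has_sum has_sum_unique by fastforce
  qed
  have "(x0, x) \<in> {(a, b). P a b > 0}\<^sup>*" using irr unfolding irreducible_chain_def by auto
  then show ?thesis
  proof (induction rule: rtrancl_induct)
    case base then show ?case by (rule x0)
  next
    case (step b c)
    then have "0 < \<pi> b * P b c" by simp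
    then show ?case using pi_ge_single[of b c] by linarith
  qed
qed

lemma split_K:
  fixes f :: "'a \<Rightarrow> real"
  assumes "f summable_on UNIV"
  shows "infsum f UNIV = sum f K + infsum f (UNIV - K)"
proof -
  have "infsum f (K \<union> (UNIV - K)) = infsum f K + infsum f (UNIV - K)"
    by (rule infsum_Un_disjoint) (use assms summable_on_subset_banach in auto)
  then show ?thesis using finK by simp
qed

lemma pi_tau_summable: "(\<lambda>x. \<pi> x * tau j x y) summable_on S"
proof (rule summable_on_abs_le[OF pi_summable])
  fix x show "\<bar>\<pi> x * tau j x y\<bar> \<le> \<pi> x"
    using pi_nonneg taboo_bounds[of "UNIV - K" j x y] by (simp add: abs_mult mult_left_le)
qed

definition Rem :: "nat \<Rightarrow> 'a \<Rightarrow> real" where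
  "Rem m y = infsum (\<lambda>x. \<pi> x * tau (Suc m) x y) (UNIV - K)"

lemma Rem_nonneg: "0 \<le> Rem m y"
  unfolding Rem_def by (rule infsum_nonneg) (simp add: pi_nonneg taboo_nonneg)

lemma Rem_step: "Rem m y = (\<Sum>k\<in>K. \<pi> k * tau (Suc (Suc m)) k y) + Rem (Suc m) y"
proof -
  define f where "f x z = \<pi> z * P z x * tau (Suc m) x y" for x z
  have inner: "infsum (\<lambda>z. f x z) UNIV = \<pi> x * tau (Suc m) x y" for x
  proof -
    have "((\<lambda>z. \<pi> z * P z x * tau (Suc m) x y) has_sum (\<pi> x * tau (Suc m) x y)) UNIV"
      by (rule has_sum_cmult_left[OF pi_stat])
    then show ?thesis unfolding f_def by (rule infsumI)
  qed
  have summ: "(\<lambda>(x, z). f x z) summable_on (UNIV - K) \<times> UNIV"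
  proof -
    have "(\<lambda>p. f (fst p) (snd p)) summable_on Sigma (UNIV - K) (\<lambda>_. UNIV)"
    proof (rule summable_on_SigmaI)
      fix x
      show "((\<lambda>z. f (fst (x, z)) (snd (x, z))) has_sum (\<pi> x * tau (Suc m) x y)) UNIV"
        unfolding f_def using has_sum_cmult_left[OF pi_stat] by simp
    next
      show "(\<lambda>x. \<pi> x * tau (Suc m) x y) summable_on (UNIV - K)" by (rule pi_tau_summable)
    next
      fix x z show "0 \<le> f (fst (x, z)) (snd (x, z))"
        unfolding f_def by (simp add: pi_nonneg P_nonneg taboo_nonneg)
    qed
    then show ?thesis by (simp add: case_prod_unfold)
  qed
  have "Rem m y = infsum (\<lambda>x. infsum (\<lambda>z. f x z) UNIV) (UNIV - K)"
    unfolding Rem_def by (simp add: inner)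
  also have "\<dots> = infsum (\<lambda>z. infsum (\<lambda>x. f x z) (UNIV - K)) UNIV"
    by (rule infsum_swap_banach[OF summ])
  also have "\<dots> = infsum (\<lambda>z. \<pi> z * tau (Suc (Suc m)) z y) UNIV"
  proof (rule infsum_cong)
    fix z
    have "infsum (\<lambda>x. f x z) (UNIV - K) = infsum (\<lambda>x. \<pi> z * (P z x * tau (Suc m) x y)) (UNIV - K)"
      unfolding f_def by (simp add: mult.assoc)
    also have "\<dots> = \<pi> z * infsum (\<lambda>x. P z x * tau (Suc m) x y) (UNIV - K)"
      by (rule infsum_cmult_right')
    also have "\<dots> = \<pi> z * tau (Suc (Suc m)) z y" by simp
    finally show "infsum (\<lambda>x. f x z) (UNIV - K) = \<pi> z * tau (Suc (Suc m)) z y" .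
  qed
  also have "\<dots> = (\<Sum>k\<in>K. \<pi> k * tau (Suc (Suc m)) k y) + Rem (Suc m) y"
    unfolding Rem_def by (rule split_K[OF pi_tau_summable])
  finally show ?thesis .
qed

lemma cycle_step:
  "\<pi> y = (\<Sum>k\<in>K. \<pi> k * (\<Sum>j<Suc (Suc m). tau j k y)) + Rem m y"
proof (induction m)
  case 0
  have "\<pi> y = infsum (\<lambda>x. \<pi> x * P x y) UNIV" using pi_stat infsumI by metis
  also have "\<dots> = (\<Sum>k\<in>K. \<pi> k * P k y) + infsum (\<lambda>x. \<pi> x * P x y) (UNIV - K)"
    by (rule split_K) (use pi_stat has_sum_imp_summable in blast)
  finally show ?case unfolding Rem_def by (simp add: numeral_2_eq_2)
next
  case (Suc m)
  have "\<pi> y = (\<Sum>k\<in>K. \<pi> k * (\<Sum>j<Suc (Suc m). tau j k y)) + ((\<Sum>k\<in>K. \<pi> k * tau (Suc (Suc m)) k y) + Rem (Suc m) y)"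
    using Suc Rem_step[of m y] by linarith
  also have "\<dots> = (\<Sum>k\<in>K. \<pi> k * (\<Sum>j<Suc (Suc m). tau j k y) + \<pi> k * tau (Suc (Suc m)) k y) + Rem (Suc m) y"
    by (simp add: sum.distrib)
  also have "\<dots> = (\<Sum>k\<in>K. \<pi> k * (\<Sum>j<Suc (Suc (Suc m)). tau j k y)) + Rem (Suc m) y"
    by (simp add: distrib_left)
  finally show ?case .
qed

lemma Rem_tendsto: "(\<lambda>m. Rem m y) \<longlonglongrightarrow> 0"
proof -
  have le: "Rem m y \<le> infsum (\<lambda>x. \<pi> x * surv (UNIV - K) m x) (UNIV - K)" for m
    unfolding Rem_def
  proof (rule infsum_mono[OF pi_tau_summable])
    show "(\<lambda>x. \<pi> x * surv (UNIV - K) m x) summable_on UNIV - K"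
      by (rule summable_on_abs_le[OF pi_summable])
         (use pi_nonneg surv_bounds in \<open>auto simp: abs_mult mult_left_le\<close>)
    fix x show "\<pi> x * tau (Suc m) x y \<le> \<pi> x * surv (UNIV - K) m x"
      using taboo_le_surv pi_nonneg by (simp add: mult_left_mono)
  qed
  have "(\<lambda>m. infsum (\<lambda>x. \<pi> x * surv (UNIV - K) m x) (UNIV - K)) \<longlonglongrightarrow> infsum (\<lambda>x. \<pi> x * 0) (UNIV - K)"
  proof (rule infsum_dominated_convergence[OF pi_summable])
    fix n x show "\<bar>\<pi> x * surv (UNIV - K) n x\<bar> \<le> \<pi> x"
      using pi_nonneg surv_bounds[of "UNIV - K" n x] by (simp add: abs_mult mult_left_le)
  next
    fix x show "(\<lambda>n. \<pi> x * surv (UNIV - K) n x) \<longlonglongrightarrow> \<pi> x * 0"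
      by (intro tendsto_intros surv_K_tendsto)
  qed
  then have lim: "(\<lambda>m. infsum (\<lambda>x. \<pi> x * surv (UNIV - K) m x) (UNIV - K)) \<longlonglongrightarrow> 0" by simp
  have ev1: "\<forall>\<^sub>F m in sequentially. 0 \<le> Rem m y" by (simp add: Rem_nonneg)
  have ev2: "\<forall>\<^sub>F m in sequentially. Rem m y \<le> infsum (\<lambda>x. \<pi> x * surv (UNIV - K) m x) (UNIV - K)"
    by (rule always_eventually, rule allI, rule le)
  show ?thesis by (rule real_tendsto_sandwich[OF ev1 ev2 tendsto_const lim])
qed

definition Ninf :: "'a \<Rightarrow> 'a \<Rightarrow> real" where
  "Ninf x y = suminf (\<lambda>j. tau j x y)"

lemma tau_fromK_summable:
  assumes k: "k \<in> K"
  shows "summable (\<lambda>j. tau j k y)"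
proof (rule summableI_nonneg_bounded)
  show "0 \<le> tau j k y" for j by (rule taboo_nonneg)
  fix n
  have "\<pi> k * (\<Sum>j<Suc (Suc n). tau j k y) \<le> (\<Sum>k'\<in>K. \<pi> k' * (\<Sum>j<Suc (Suc n). tau j k' y))"
  proof (rule member_le_sum[OF k _ finK])
    fix k' assume "k' \<in> K - {k}"
    have "0 \<le> (\<Sum>j<Suc (Suc n). tau j k' y)" by (rule sum_nonneg) (simp add: taboo_nonneg)
    then show "0 \<le> \<pi> k' * (\<Sum>j<Suc (Suc n). tau j k' y)" using pi_nonneg by simp
  qed
  also have "\<dots> \<le> \<pi> y" using cycle_step[of y n] Rem_nonneg[of n y] by linarith
  finally have "(\<Sum>j<Suc (Suc n). tau j k y) \<le> \<pi> y / \<pi> k"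
    using pi_pos[of k] by (simp add: field_simps)
  moreover have "(\<Sum>j<n. tau j k y) \<le> (\<Sum>j<Suc (Suc n). tau j k y)"
    by (rule sum_mono2) (auto simp: taboo_nonneg)
  ultimately show "(\<Sum>j<n. tau j k y) \<le> \<pi> y / \<pi> k" by linarith
qed

lemma cycle_formula: "\<pi> y = (\<Sum>k\<in>K. \<pi> k * Ninf k y)"
proof -
  define s where "s m = (\<Sum>k\<in>K. \<pi> k * (\<Sum>j<Suc (Suc m). tau j k y))" for m
  have "(\<lambda>m. \<pi> y - Rem m y) \<longlonglongrightarrow> \<pi> y - 0" by (intro tendsto_intros Rem_tendsto)
  moreover have "s m = \<pi> y - Rem m y" for m unfolding s_def using cycle_step[of y m] by linarith
  then have "s = (\<lambda>m. \<pi> y - Rem m y)" by (intro ext)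
  ultimately have l1: "s \<longlonglongrightarrow> \<pi> y" by simp
  have l2: "s \<longlonglongrightarrow> (\<Sum>k\<in>K. \<pi> k * Ninf k y)"
    unfolding s_def Ninf_def
  proof (intro tendsto_intros)
    fix k assume "k \<in> K"
    have "(\<lambda>m. \<Sum>j<m. tau j k y) \<longlonglongrightarrow> suminf (\<lambda>j. tau j k y)"
      using summable_LIMSEQ[OF tau_fromK_summable[OF \<open>k \<in> K\<close>]] by simp
    then show "(\<lambda>m. \<Sum>j<Suc (Suc m). tau j k y) \<longlonglongrightarrow> suminf (\<lambda>j. tau j k y)"
      by (intro LIMSEQ_Suc)
  qed
  show ?thesis using LIMSEQ_unique[OF l1 l2] .
qed

lemma Ninf_nonneg: "summable (\<lambda>j. tau j x y) \<Longrightarrow> 0 \<le> Ninf x y"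
  unfolding Ninf_def by (intro suminf_nonneg) (auto simp: taboo_nonneg)

lemma Ninf_toK_sum: "(\<Sum>k\<in>K. Ninf x k) = 1"
  unfolding Ninf_def by (rule tau_toK_sum)

end

context mc begin

lemma taboo_append:
  assumes "finite C"
  shows "taboo P C (Suc (Suc j)) x y = (\<Sum>z\<in>C. taboo P C (Suc j) x z * P z y)"
proof (induction j arbitrary: x)
  case 0 then show ?case using assms by simp
next
  case (Suc j)
  have "taboo P C (Suc (Suc (Suc j))) x y = (\<Sum>z\<in>C. P x z * taboo P C (Suc (Suc j)) z y)"
    by (simp only: taboo.simps infsum_finite[OF assms])
  also have "\<dots> = (\<Sum>z\<in>C. P x z * (\<Sum>w\<in>C. taboo P C (Suc j) z w * P w y))"
    by (simp only: Suc.IH)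
  also have "\<dots> = (\<Sum>z\<in>C. \<Sum>w\<in>C. P x z * taboo P C (Suc j) z w * P w y)"
    by (simp add: sum_distrib_left mult.assoc)
  also have "\<dots> = (\<Sum>w\<in>C. \<Sum>z\<in>C. P x z * taboo P C (Suc j) z w * P w y)"
    by (rule sum.swap)
  also have "\<dots> = (\<Sum>w\<in>C. (\<Sum>z\<in>C. P x z * taboo P C (Suc j) z w) * P w y)"
    by (simp add: sum_distrib_right)
  also have "\<dots> = (\<Sum>w\<in>C. taboo P C (Suc (Suc j)) x w * P w y)"
    by (simp only: taboo.simps infsum_finite[OF assms])
  finally show ?case .
qed

end

locale fin = chain P \<pi> K for P :: "'a::countable \<Rightarrow> 'a \<Rightarrow> real" and \<pi> K +
  fixes A :: "'a set"
  assumes finA: "finite A" and KA: "K \<subseteq> A"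
begin

definition NA :: "'a \<Rightarrow> 'a \<Rightarrow> real" where
  "NA x y = suminf (\<lambda>j. taboo P (A - K) j x y)"

lemma finB: "finite (A - K)" using finA by simp

lemma tabooA_le: "taboo P (A - K) j x y \<le> tau j x y"
  by (rule taboo_mono_set) auto

lemma NA_summ_toK:
  assumes "y \<in> K" shows "summable (\<lambda>j. taboo P (A - K) j x y)"
  by (rule summable_comparison_test'[OF tau_toK_summable[OF assms, of x]]) (simp add: taboo_nonneg tabooA_le)

lemma NA_summ_fromK:
  assumes "k \<in> K" shows "summable (\<lambda>j. taboo P (A - K) j k y)"
  by (rule summable_comparison_test'[OF tau_fromK_summable[OF assms, of y]]) (simp add: taboo_nonneg tabooA_le)

lemma NA_summ: "y \<in> K \<or> x \<in> K \<Longrightarrow> summable (\<lambda>j. taboo P (A - K) j x y)"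
  using NA_summ_toK NA_summ_fromK by blast

lemma Ninf_summ: "y \<in> K \<or> x \<in> K \<Longrightarrow> summable (\<lambda>j. tau j x y)"
  using tau_toK_summable tau_fromK_summable by blast

lemma NA_nonneg: "y \<in> K \<or> x \<in> K \<Longrightarrow> 0 \<le> NA x y"
  unfolding NA_def using NA_summ by (intro suminf_nonneg) (auto simp: taboo_nonneg)

lemma NA_le_Ninf: "y \<in> K \<or> x \<in> K \<Longrightarrow> NA x y \<le> Ninf x y"
  unfolding NA_def Ninf_def using NA_summ Ninf_summ by (intro suminf_le) (auto simp: tabooA_le)

lemma NA_ge_term: "y \<in> K \<or> x \<in> K \<Longrightarrow> taboo P (A - K) j x y \<le> NA x y"
  unfolding NA_def using sum_le_suminf[OF NA_summ, of y x "{j}"] by (auto simp: taboo_nonneg)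

lemma Gmat_eq: "y \<in> K \<Longrightarrow> Gmat P K A x y = NA x y"
  by (simp add: Gmat_def NA_def)

abbreviation u :: "'a \<Rightarrow> real" where "u \<equiv> uhit P K A"

lemma u_eq: "u x = (\<Sum>k\<in>K. NA x k)"
  unfolding uhit_def by (rule sum.cong) (auto simp: Gmat_eq)

lemma u_nonneg: "0 \<le> u x"
  unfolding u_eq by (rule sum_nonneg) (simp add: NA_nonneg)

lemma u_le1: "u x \<le> 1"
proof -
  have "u x \<le> (\<Sum>k\<in>K. Ninf x k)" unfolding u_eq by (rule sum_mono) (simp add: NA_le_Ninf)
  then show ?thesis using Ninf_toK_sum by simp
qed

lemma suminf_split2:
  fixes f :: "nat \<Rightarrow> real"
  assumes "summable f" "f 0 = 0"
  shows "suminf f = f 1 + (\<Sum>n. f (Suc (Suc n)))"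
proof -
  have "suminf f = (\<Sum>n. f (n + 2)) + (\<Sum>i<2. f i)" by (rule suminf_split_initial_segment[OF assms(1)])
  then show ?thesis using assms(2) by (simp add: numeral_2_eq_2)
qed

lemma NA_shift:
  assumes "y \<in> K \<or> x \<in> K" shows "(\<Sum>n. taboo P (A - K) (Suc n) x y) = NA x y"
  unfolding NA_def using suminf_split_head[OF NA_summ[OF assms]] by simp

lemma NA_shift_summable:
  assumes "y \<in> K \<or> x \<in> K" shows "summable (\<lambda>n. taboo P (A - K) (Suc n) x y)"
  by (subst summable_Suc_iff) (rule NA_summ[OF assms])

lemma NA_first_step:
  assumes y: "y \<in> K"
  shows "NA x y = P x y + (\<Sum>z\<in>A - K. P x z * NA z y)"
proof -
  have "NA x y = taboo P (A - K) 1 x y + (\<Sum>n. taboo P (A - K) (Suc (Suc n)) x y)"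
    unfolding NA_def by (rule suminf_split2) (use NA_summ y in auto)
  also have "(\<Sum>n. taboo P (A - K) (Suc (Suc n)) x y) = (\<Sum>n. \<Sum>z\<in>A - K. P x z * taboo P (A - K) (Suc n) z y)"
    using finB by simp
  also have "\<dots> = (\<Sum>z\<in>A - K. \<Sum>n. P x z * taboo P (A - K) (Suc n) z y)"
    by (rule suminf_sum) (use NA_shift_summable y in \<open>auto intro: summable_mult\<close>)
  also have "\<dots> = (\<Sum>z\<in>A - K. P x z * NA z y)"
    by (rule sum.cong[OF refl]) (use NA_shift_summable NA_shift y in \<open>auto simp: suminf_mult\<close>)
  finally show ?thesis by simp
qed

lemma u_first_step: "u x = (\<Sum>k\<in>K. P x k) + (\<Sum>z\<in>A - K. P x z * u z)"
proof -
  have "u x = (\<Sum>k\<in>K. P x k + (\<Sum>z\<in>A - K. P x z * NA z k))"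
    unfolding u_eq by (rule sum.cong[OF refl]) (rule NA_first_step)
  also have "\<dots> = (\<Sum>k\<in>K. P x k) + (\<Sum>k\<in>K. \<Sum>z\<in>A - K. P x z * NA z k)" by (simp add: sum.distrib)
  also have "(\<Sum>k\<in>K. \<Sum>z\<in>A - K. P x z * NA z k) = (\<Sum>z\<in>A - K. P x z * u z)"
    by (subst sum.swap) (simp add: u_eq sum_distrib_left)
  finally show ?thesis .
qed

lemma u_ge_P: "z \<in> A - K \<Longrightarrow> P x z * u z \<le> u x"
proof -
  assume z: "z \<in> A - K"
  have "P x z * u z \<le> (\<Sum>z\<in>A - K. P x z * u z)"
    by (rule member_le_sum[OF z _ finB]) (simp add: P_nonneg u_nonneg)
  moreover have "0 \<le> (\<Sum>k\<in>K. P x k)" by (simp add: sum_nonneg P_nonneg)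
  ultimately show ?thesis using u_first_step[of x] by linarith
qed

lemma u_ge_PK: "k \<in> K \<Longrightarrow> P x k \<le> u x"
proof -
  assume k: "k \<in> K"
  have "P x k \<le> (\<Sum>k\<in>K. P x k)" by (rule member_le_sum[OF k _ finK]) (simp add: P_nonneg)
  moreover have "0 \<le> (\<Sum>z\<in>A - K. P x z * u z)" by (simp add: sum_nonneg P_nonneg u_nonneg)
  ultimately show ?thesis using u_first_step[of x] by linarith
qed

lemma NA_append:
  assumes k: "k \<in> K"
  shows "NA k y = P k y + (\<Sum>x\<in>A - K. NA k x * P x y)"
proof -
  have "NA k y = taboo P (A - K) 1 k y + (\<Sum>n. taboo P (A - K) (Suc (Suc n)) k y)"
    unfolding NA_def by (rule suminf_split2) (use NA_summ k in auto)
  also have "(\<Sum>n. taboo P (A - K) (Suc (Suc n)) k y) = (\<Sum>n. \<Sum>x\<in>A - K. taboo P (A - K) (Suc n) k x * P x y)"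
    using taboo_append[OF finB] by simp
  also have "\<dots> = (\<Sum>x\<in>A - K. \<Sum>n. taboo P (A - K) (Suc n) k x * P x y)"
    by (rule suminf_sum) (use NA_shift_summable k in \<open>auto intro: summable_mult2\<close>)
  also have "\<dots> = (\<Sum>x\<in>A - K. NA k x * P x y)"
    by (rule sum.cong[OF refl]) (use NA_shift_summable NA_shift k in \<open>auto simp: suminf_mult2[symmetric]\<close>)
  finally show ?thesis by simp
qed

end

context fin begin

lemma Rmat_nonneg: "0 \<le> Rmat P K A x y"
  unfolding Rmat_def using P_nonneg u_nonneg by (auto intro: divide_nonneg_nonneg mult_nonneg_nonneg)

lemma splitA: "(\<Sum>x\<in>A. f x) = (\<Sum>x\<in>K. f x) + (\<Sum>x\<in>A - K. (f x::real))"
  using sum.subset_diff[OF KA finA, of f] by (simp add: add.commute)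

lemma stat_E:
  assumes cc: "closed_comm_class (Sprime P K A) (Rmat P K A) S2"
    and st: "stationary_on S2 (Rmat P K A) q" and KS: "K \<subseteq> S2"
    and y: "y \<in> A"
  shows "q y = (if y \<in> K then 1 else u y) * (\<Sum>x\<in>A. q x / u x * P x y)"
proof -
  define R where "R = Rmat P K A"
  define E where "E = {(a, b). a \<in> Sprime P K A \<and> b \<in> Sprime P K A \<and> R a b > 0}"
  have S2S: "S2 \<subseteq> Sprime P K A" using cc unfolding closed_comm_class_def by auto
  have SA: "Sprime P K A \<subseteq> A" unfolding Sprime_def by auto
  have closed: "\<And>x y. x \<in> S2 \<Longrightarrow> y \<in> Sprime P K A \<Longrightarrow> (x, y) \<in> E\<^sup>* \<Longrightarrow> y \<in> S2"
    using cc unfolding closed_comm_class_def E_def R_def by blast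
  have qnn: "\<And>x. 0 \<le> q x" and q0: "\<And>x. x \<notin> S2 \<Longrightarrow> q x = 0"
    and qst: "\<And>y. y \<in> S2 \<Longrightarrow> (\<Sum>x\<in>S2. q x * R x y) = q y"
    using st unfolding stationary_on_def R_def by auto
  have step1: "q y = (\<Sum>x\<in>A. q x * R x y)"
  proof (cases "y \<in> S2")
    case True
    have "(\<Sum>x\<in>S2. q x * R x y) = (\<Sum>x\<in>A. q x * R x y)"
      by (rule sum.mono_neutral_left[OF finA]) (use S2S SA q0 in auto)
    then show ?thesis using qst[OF True] by simp
  next
    case False
    have "(\<Sum>x\<in>A. q x * R x y) = 0"
    proof (rule sum.neutral, rule ballI)
      fix x assume "x \<in> A"
      show "q x * R x y = 0"
      proof (cases "x \<in> S2")
        case False then show ?thesis using q0 by simp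
      next
        case xS: True
        have "\<not> R x y > 0"
        proof
          assume pos: "R x y > 0"
          have xS': "x \<in> Sprime P K A" using xS S2S by auto
          have yS': "y \<in> Sprime P K A"
          proof (cases "y \<in> K")
            case True then show ?thesis using KS S2S by auto
          next
            case False
            then show ?thesis using pos unfolding R_def Rmat_def by (auto split: if_splits)
          qed
          have "(x, y) \<in> E" using xS' yS' pos by (simp add: E_def)
          then have "y \<in> S2" using closed[OF xS yS'] by auto
          then show False using \<open>y \<notin> S2\<close> by simp
        qed
        then have "R x y = 0" using Rmat_nonneg[of x y] unfolding R_def by linarith
        then show ?thesis by simp
      qed
    qed
    then show ?thesis using q0[OF False] by simp
  qed
  have step2: "q x * R x y = (if y \<in> K then 1 else u y) * (q x / u x * P x y)" if x: "x \<in> A" for x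
  proof (cases "x \<in> Sprime P K A")
    case False
    then have "x \<notin> S2" using S2S by auto
    then show ?thesis using q0 by simp
  next
    case xS: True
    show ?thesis
    proof (cases "y \<in> K")
      case True then show ?thesis using xS unfolding R_def Rmat_def by simp
    next
      case yK: False
      show ?thesis
      proof (cases "y \<in> Sprime P K A")
        case True then show ?thesis using xS yK unfolding R_def Rmat_def by simp
      next
        case False
        then have "u y = 0" using y u_nonneg[of y] unfolding Sprime_def by auto
        then show ?thesis using xS yK False unfolding R_def Rmat_def by simp
      qed
    qed
  qed
  have "q y = (\<Sum>x\<in>A. (if y \<in> K then 1 else u y) * (q x / u x * P x y))"
    using step1 step2 by simp
  also have "\<dots> = (if y \<in> K then 1 else u y) * (\<Sum>x\<in>A. q x / u x * P x y)"
    by (simp add: sum_distrib_left)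
  finally show ?thesis .
qed


definition pp :: "nat \<Rightarrow> 'a \<Rightarrow> 'a \<Rightarrow> real" where
  "pp m k y = (\<Sum>j<m. taboo P (A - K) j k y)"

lemma pp_rec: "pp (Suc (Suc m)) k y = P k y + (\<Sum>x\<in>A - K. pp (Suc m) k x * P x y)"
proof -
  have a: "pp (Suc (Suc m)) k y = P k y + (\<Sum>i<m. taboo P (A - K) (Suc (Suc i)) k y)"
    unfolding pp_def by (simp only: sum.lessThan_Suc_shift) simp
  have b: "pp (Suc m) k x = (\<Sum>i<m. taboo P (A - K) (Suc i) k x)" for x
    unfolding pp_def by (simp only: sum.lessThan_Suc_shift) simp
  have "(\<Sum>i<m. taboo P (A - K) (Suc (Suc i)) k y) = (\<Sum>i<m. \<Sum>x\<in>A - K. taboo P (A - K) (Suc i) k x * P x y)"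
    by (rule sum.cong[OF refl]) (rule taboo_append[OF finB])
  also have "\<dots> = (\<Sum>x\<in>A - K. \<Sum>i<m. taboo P (A - K) (Suc i) k x * P x y)" by (rule sum.swap)
  also have "\<dots> = (\<Sum>x\<in>A - K. pp (Suc m) k x * P x y)" by (simp add: b sum_distrib_right)
  finally show ?thesis using a by simp
qed

lemma F1:
  assumes cc: "closed_comm_class (Sprime P K A) (Rmat P K A) S2"
    and st: "stationary_on S2 (Rmat P K A) q" and KS: "K \<subseteq> S2"
    and y: "y \<in> A"
  shows "q y = (if y \<in> K then 1 else u y) * (\<Sum>k\<in>K. q k / u k * NA k y)"
proof -
  define w where "w x = q x / u x" for x
  define z where "z y = (\<Sum>k\<in>K. w k * NA k y)" for y
  define B' where "B' = {y \<in> A - K. 0 < u y}"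
  have finB': "finite B'" using finA by (simp add: B'_def)
  have B'sub: "B' \<subseteq> A - K" by (auto simp: B'_def)
  have qnn: "\<And>x. 0 \<le> q x" using st unfolding stationary_on_def by auto
  have wnn: "0 \<le> w x" for x unfolding w_def using qnn u_nonneg by (simp add: divide_nonneg_nonneg)
  have E: "q y = (if y \<in> K then 1 else u y) * (\<Sum>x\<in>A. w x * P x y)" if "y \<in> A" for y
    unfolding w_def by (rule stat_E[OF cc st KS that])
  have u0: "u x = 0" if "\<not> 0 < u x" for x using that u_nonneg[of x] by linarith
  have w0: "w x = 0" if "\<not> 0 < u x" for x using u0[OF that] by (simp add: w_def)
  have Pzero: "P x y = 0" if "u x = 0" "y \<in> A - K" "0 < u y" for x y
  proof -
    have "P x y * u y \<le> 0" using u_ge_P[OF that(2), of x] that(1) by simp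
    then show ?thesis using that(3) P_nonneg[of x y] by (simp add: mult_le_0_iff)
  qed
  have PzeroK: "P x k = 0" if "u x = 0" "k \<in> K" for x k
    using u_ge_PK[OF that(2), of x] that(1) P_nonneg[of x k] by simp
  have wB: "w y = (\<Sum>k\<in>K. w k * P k y) + (\<Sum>x\<in>B'. w x * P x y)" if yB: "y \<in> B'" for y
  proof -
    have yA: "y \<in> A" "y \<notin> K" "0 < u y" using yB by (auto simp: B'_def)
    have "q y = u y * (\<Sum>x\<in>A. w x * P x y)" using E[OF yA(1)] yA(2) by simp
    then have "w y = (\<Sum>x\<in>A. w x * P x y)" using yA(3) by (simp add: w_def)
    also have "\<dots> = (\<Sum>k\<in>K. w k * P k y) + (\<Sum>x\<in>A - K. w x * P x y)" by (rule splitA)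
    also have "(\<Sum>x\<in>A - K. w x * P x y) = (\<Sum>x\<in>B'. w x * P x y)"
      proof (rule sum.mono_neutral_right[OF finB B'sub], rule ballI)
        fix x assume "x \<in> A - K - B'"
        then have "\<not> 0 < u x" by (auto simp: B'_def)
        then show "w x * P x y = 0" using w0 by simp
      qed
    finally show ?thesis .
  qed
  have zrec: "z y = (\<Sum>k\<in>K. w k * P k y) + (\<Sum>x\<in>A - K. z x * P x y)" for y
  proof -
    have "z y = (\<Sum>k\<in>K. w k * (P k y + (\<Sum>x\<in>A - K. NA k x * P x y)))"
      unfolding z_def by (rule sum.cong[OF refl]) (simp add: NA_append)
    also have "\<dots> = (\<Sum>k\<in>K. w k * P k y) + (\<Sum>k\<in>K. \<Sum>x\<in>A - K. w k * NA k x * P x y)"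
      by (simp add: distrib_left sum.distrib sum_distrib_left mult.assoc)
    also have "(\<Sum>k\<in>K. \<Sum>x\<in>A - K. w k * NA k x * P x y) = (\<Sum>x\<in>A - K. z x * P x y)"
      by (subst sum.swap) (simp add: z_def sum_distrib_right)
    finally show ?thesis .
  qed
  have zB: "z y = (\<Sum>k\<in>K. w k * P k y) + (\<Sum>x\<in>B'. z x * P x y)" if yB: "y \<in> B'" for y
  proof -
    have "(\<Sum>x\<in>A - K. z x * P x y) = (\<Sum>x\<in>B'. z x * P x y)"
    proof (rule sum.mono_neutral_right[OF finB B'sub], rule ballI)
      fix x assume "x \<in> A - K - B'"
      then have "u x = 0" using u0 by (auto simp: B'_def)
      then show "z x * P x y = 0" using Pzero yB by (auto simp: B'_def)
    qed
    then show ?thesis using zrec[of y] by simp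
  qed
  have claim: "\<forall>y\<in>B'. (\<Sum>k\<in>K. w k * pp (Suc m) k y) \<le> w y" for m
  proof (induction m)
    case 0 then show ?case by (simp add: pp_def wnn)
  next
    case (Suc m)
    show ?case
    proof
      fix y assume yB: "y \<in> B'"
      have "(\<Sum>k\<in>K. w k * pp (Suc (Suc m)) k y)
          = (\<Sum>k\<in>K. w k * P k y) + (\<Sum>k\<in>K. \<Sum>x\<in>A - K. w k * pp (Suc m) k x * P x y)"
        by (simp add: pp_rec distrib_left sum.distrib sum_distrib_left mult.assoc)
      also have "(\<Sum>k\<in>K. \<Sum>x\<in>A - K. w k * pp (Suc m) k x * P x y)
          = (\<Sum>x\<in>A - K. (\<Sum>k\<in>K. w k * pp (Suc m) k x) * P x y)"
        by (subst sum.swap) (simp add: sum_distrib_right)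
      also have "\<dots> \<le> (\<Sum>x\<in>A - K. w x * P x y)"
      proof (rule sum_mono)
        fix x assume xB: "x \<in> A - K"
        show "(\<Sum>k\<in>K. w k * pp (Suc m) k x) * P x y \<le> w x * P x y"
        proof (cases "0 < u x")
          case True
          then have "x \<in> B'" using xB by (simp add: B'_def)
          then show ?thesis using Suc.IH P_nonneg by (simp add: mult_right_mono)
        next
          case False
          then have "P x y = 0" using Pzero[OF u0[OF False]] yB by (auto simp: B'_def)
          then show ?thesis by simp
        qed
      qed
      also have "(\<Sum>x\<in>A - K. w x * P x y) = (\<Sum>x\<in>B'. w x * P x y)"
        proof (rule sum.mono_neutral_right[OF finB B'sub], rule ballI)
        fix x assume "x \<in> A - K - B'"
        then have "\<not> 0 < u x" by (auto simp: B'_def)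
        then show "w x * P x y = 0" using w0 by simp
      qed
      finally show "(\<Sum>k\<in>K. w k * pp (Suc (Suc m)) k y) \<le> w y" using wB[OF yB] by simp
    qed
  qed
  have z_le_w: "z y \<le> w y" if yB: "y \<in> B'" for y
  proof -
    have summ: "summable (\<lambda>j. taboo P (A - K) j k y)" if "k \<in> K" for k using NA_summ that by blast
    have "z y = (\<Sum>k\<in>K. \<Sum>j. w k * taboo P (A - K) j k y)"
      unfolding z_def NA_def by (rule sum.cong[OF refl]) (simp add: suminf_mult[OF summ])
    also have "\<dots> = (\<Sum>j. \<Sum>k\<in>K. w k * taboo P (A - K) j k y)"
      by (rule suminf_sum[symmetric]) (auto intro: summable_mult summ)
    also have "\<dots> \<le> w y"
    proof (rule suminf_le_const)
      show "summable (\<lambda>j. \<Sum>k\<in>K. w k * taboo P (A - K) j k y)"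
        by (auto intro!: summable_sum summable_mult summ)
      fix n
      have eq: "(\<Sum>j<n. \<Sum>k\<in>K. w k * taboo P (A - K) j k y) = (\<Sum>k\<in>K. w k * pp n k y)"
        unfolding pp_def by (subst sum.swap) (simp add: sum_distrib_left)
      show "(\<Sum>j<n. \<Sum>k\<in>K. w k * taboo P (A - K) j k y) \<le> w y"
      proof (cases n)
        case 0 then show ?thesis using wnn by simp
      next
        case (Suc m) then show ?thesis using eq claim yB by simp
      qed
    qed
    finally show ?thesis .
  qed
  define d where "d y = w y - z y" for y
  have dnn: "0 \<le> d y" if "y \<in> B'" for y using z_le_w[OF that] by (simp add: d_def)
  have deq: "d y = (\<Sum>x\<in>B'. d x * P x y)" if "y \<in> B'" for y
    using wB[OF that] zB[OF that] by (simp add: d_def sum_subtractf left_diff_distrib)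
  have ueq: "u x = (\<Sum>k\<in>K. P x k) + (\<Sum>y\<in>B'. P x y * u y)" for x
  proof -
    have "(\<Sum>y\<in>A - K. P x y * u y) = (\<Sum>y\<in>B'. P x y * u y)"
    proof (rule sum.mono_neutral_right[OF finB B'sub], rule ballI)
      fix y assume "y \<in> A - K - B'"
      then have "\<not> 0 < u y" by (auto simp: B'_def)
      then show "P x y * u y = 0" using u0 by simp
    qed
    then show ?thesis using u_first_step[of x] by simp
  qed
  have sumzero: "(\<Sum>x\<in>B'. d x * (\<Sum>k\<in>K. P x k)) = 0"
  proof -
    have "(\<Sum>y\<in>B'. d y * u y) = (\<Sum>y\<in>B'. \<Sum>x\<in>B'. d x * P x y * u y)"
      by (rule sum.cong[OF refl]) (simp add: deq sum_distrib_right)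
    also have "\<dots> = (\<Sum>x\<in>B'. d x * (\<Sum>y\<in>B'. P x y * u y))"
      by (subst sum.swap) (simp add: sum_distrib_left mult.assoc)
    finally have 1: "(\<Sum>y\<in>B'. d y * u y) = (\<Sum>x\<in>B'. d x * (\<Sum>y\<in>B'. P x y * u y))" .
    have "(\<Sum>x\<in>B'. d x * u x) = (\<Sum>x\<in>B'. d x * (\<Sum>k\<in>K. P x k) + d x * (\<Sum>y\<in>B'. P x y * u y))"
    proof (rule sum.cong[OF refl])
      fix x show "d x * u x = d x * (\<Sum>k\<in>K. P x k) + d x * (\<Sum>y\<in>B'. P x y * u y)"
        by (simp only: ueq[of x] distrib_left)
    qed
    also have "\<dots> = (\<Sum>x\<in>B'. d x * (\<Sum>k\<in>K. P x k)) + (\<Sum>x\<in>B'. d x * (\<Sum>y\<in>B'. P x y * u y))"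
      by (rule sum.distrib)
    finally have "(\<Sum>x\<in>B'. d x * u x) = (\<Sum>x\<in>B'. d x * (\<Sum>k\<in>K. P x k)) + (\<Sum>x\<in>B'. d x * (\<Sum>y\<in>B'. P x y * u y))" .
    then show ?thesis using 1 by simp
  qed
  have dPK: "d x * P x k = 0" if xB: "x \<in> B'" and k: "k \<in> K" for x k
  proof -
    have nn: "\<And>x. x \<in> B' \<Longrightarrow> 0 \<le> d x * (\<Sum>k\<in>K. P x k)"
      using dnn P_nonneg by (simp add: sum_nonneg)
    have "\<forall>x\<in>B'. d x * (\<Sum>k\<in>K. P x k) = 0"
    proof -
      have "((\<Sum>x\<in>B'. d x * (\<Sum>k\<in>K. P x k)) = 0) = (\<forall>x\<in>B'. d x * (\<Sum>k\<in>K. P x k) = 0)"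
        by (rule sum_nonneg_eq_0_iff[OF finB']) (rule nn)
      then show ?thesis using sumzero by blast
    qed
    then have a: "d x * (\<Sum>k\<in>K. P x k) = 0" using xB by blast
    show ?thesis
    proof (cases "d x = 0")
      case False
      then have "(\<Sum>k\<in>K. P x k) = 0" using a by simp
      then have "P x k = 0" using sum_nonneg_eq_0_iff[OF finK] P_nonneg k by blast
      then show ?thesis by simp
    qed simp
  qed
  have propag: "\<forall>x\<in>B'. \<forall>k\<in>K. 0 < taboo P (A - K) (Suc j) x k \<longrightarrow> d x = 0" for j
  proof (induction j)
    case 0
    show ?case
    proof (intro ballI impI)
      fix x k assume "x \<in> B'" "k \<in> K" "0 < taboo P (A - K) (Suc 0) x k"
      then show "d x = 0" using dPK[of x k] by simp
    qed
  next
    case (Suc j)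
    show ?case
    proof (intro ballI impI)
      fix x k assume xB: "x \<in> B'" and k: "k \<in> K" and pos: "0 < taboo P (A - K) (Suc (Suc j)) x k"
      have "0 < (\<Sum>z\<in>A - K. P x z * taboo P (A - K) (Suc j) z k)" using pos finB by simp
      then obtain zz where zz: "zz \<in> A - K" "0 < P x zz * taboo P (A - K) (Suc j) zz k"
        by (metis (no_types, lifting) not_le sum_nonpos)
      have Ppos: "0 < P x zz" and tpos: "0 < taboo P (A - K) (Suc j) zz k"
        using zz(2) P_nonneg[of x zz] taboo_nonneg[of "A - K" "Suc j" zz k]
        by (auto simp: zero_less_mult_iff)
      have "taboo P (A - K) (Suc j) zz k \<le> NA zz k" using NA_ge_term k by blast
      also have "NA zz k \<le> u zz" unfolding u_eq
        by (rule member_le_sum[OF k _ finK]) (simp add: NA_nonneg)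
      finally have "zz \<in> B'" using tpos zz(1) by (simp add: B'_def)
      then have dz: "d zz = 0" using Suc.IH k tpos by blast
      have "(\<Sum>x'\<in>B'. d x' * P x' zz) = 0" using deq[OF \<open>zz \<in> B'\<close>] dz by simp
      moreover have "((\<Sum>x'\<in>B'. d x' * P x' zz) = 0) = (\<forall>x'\<in>B'. d x' * P x' zz = 0)"
        by (rule sum_nonneg_eq_0_iff[OF finB']) (use dnn P_nonneg in simp)
      ultimately have "\<forall>x'\<in>B'. d x' * P x' zz = 0" by blast
      then have "d x * P x zz = 0" using xB by blast
      then show "d x = 0" using Ppos by simp
    qed
  qed
  have reach: "\<exists>k\<in>K. \<exists>j. 0 < taboo P (A - K) (Suc j) x k" if xB: "x \<in> B'" for x
  proof -
    have "0 < u x" using xB by (simp add: B'_def)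
    then have "0 < (\<Sum>k\<in>K. NA x k)" by (simp add: u_eq)
    then obtain k where k: "k \<in> K" "0 < NA x k" by (metis (no_types, lifting) not_le sum_nonpos)
    then obtain i where i: "0 < taboo P (A - K) i x k"
      unfolding NA_def using suminf_pos_iff[OF NA_summ[of k x]] taboo_nonneg by auto
    then have "i \<noteq> 0" by (cases i) auto
    then obtain j where "i = Suc j" by (cases i) auto
    then show ?thesis using k i by blast
  qed
  have wz: "w x = z x" if "x \<in> B'" for x
    using reach[OF that] propag that by (auto simp: d_def)
  show ?thesis
  proof (cases "y \<in> K")
    case True
    have "q y = (\<Sum>x\<in>A. w x * P x y)" using E[OF y] True by simp
    also have "\<dots> = (\<Sum>k\<in>K. w k * P k y) + (\<Sum>x\<in>A - K. w x * P x y)" by (rule splitA)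
    also have "(\<Sum>x\<in>A - K. w x * P x y) = (\<Sum>x\<in>A - K. z x * P x y)"
    proof (rule sum.cong[OF refl])
      fix x assume xB: "x \<in> A - K"
      show "w x * P x y = z x * P x y"
      proof (cases "0 < u x")
        case True then show ?thesis using wz xB by (simp add: B'_def)
      next
        case False then show ?thesis using PzeroK[OF u0[OF False] \<open>y \<in> K\<close>] by simp
      qed
    qed
    also have "(\<Sum>k\<in>K. w k * P k y) + (\<Sum>x\<in>A - K. z x * P x y) = z y" using zrec[of y] by simp
    finally show ?thesis using True by (simp add: z_def w_def)
  next
    case False
    show ?thesis
    proof (cases "0 < u y")
      case True
      then have "y \<in> B'" using y False by (simp add: B'_def)
      then have "w y = z y" by (rule wz)
      then have "q y / u y = z y" by (simp add: w_def)
      then have "q y = u y * z y" using True by (simp add: field_simps)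
      then show ?thesis using False by (simp add: z_def w_def)
    next
      case uf: False
      have "q y = 0" using E[OF y] False u0[OF uf] by simp
      then show ?thesis using False u0[OF uf] by simp
    qed
  qed
qed

end

lemma finite_BW_aux:
  fixes a :: "nat \<Rightarrow> 'a \<Rightarrow> real"
  assumes "finite K"
  shows "(\<forall>n. \<forall>k\<in>K. \<bar>a n k\<bar> \<le> M) \<longrightarrow> (\<exists>r. strict_mono r \<and> (\<forall>k\<in>K. convergent (\<lambda>n. a (r n) k)))"
  using assms
proof (induction K arbitrary: a rule: finite_induct)
  case empty
  show ?case by (intro impI exI[of _ id]) (simp add: strict_mono_def)
next
  case (insert x F)
  show ?case
  proof
    assume bnd: "\<forall>n. \<forall>k\<in>insert x F. \<bar>a n k\<bar> \<le> M"
    obtain r where r: "strict_mono r" "\<forall>k\<in>F. convergent (\<lambda>n. a (r n) k)" using insert.IH[of a] bnd by auto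
    obtain s where s: "strict_mono s" "monoseq (\<lambda>n. a (r (s n)) x)"
      using seq_monosub[of "\<lambda>n. a (r n) x"] by blast
    have "Bseq (\<lambda>n. a (r (s n)) x)" by (rule BseqI'[of _ M]) (use bnd in simp)
    then have cx: "convergent (\<lambda>n. a (r (s n)) x)" using s(2) Bseq_monoseq_convergent by blast
    have cF: "convergent (\<lambda>n. a (r (s n)) k)" if "k \<in> F" for k
    proof -
      have "convergent (\<lambda>n. a (r n) k)" using r(2) that by blast
      then obtain l where "(\<lambda>n. a (r n) k) \<longlonglongrightarrow> l" unfolding convergent_def by blast
      then have "((\<lambda>n. a (r n) k) \<circ> s) \<longlonglongrightarrow> l" by (rule LIMSEQ_subseq_LIMSEQ[OF _ s(1)])
      then show ?thesis by (auto simp: convergent_def o_def)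
    qed
    show "\<exists>r. strict_mono r \<and> (\<forall>k\<in>insert x F. convergent (\<lambda>n. a (r n) k))"
      by (rule exI[of _ "r \<circ> s"]) (use strict_mono_o[OF r(1) s(1)] cx cF in auto)
  qed
qed

lemma finite_BW:
  fixes a :: "nat \<Rightarrow> 'a \<Rightarrow> real"
  assumes "finite K" and bnd: "\<And>n k. k \<in> K \<Longrightarrow> \<bar>a n k\<bar> \<le> M"
  shows "\<exists>r. strict_mono r \<and> (\<forall>k\<in>K. convergent (\<lambda>n. a (r n) k))"
  using finite_BW_aux[OF assms(1), of a M] bnd by blast

lemma invariant_unique:
  fixes G :: "'a \<Rightarrow> 'a \<Rightarrow> real"
  assumes finK: "finite K" and Kne: "K \<noteq> {}"
    and Gnn: "\<And>k y. k \<in> K \<Longrightarrow> y \<in> K \<Longrightarrow> 0 \<le> G k y"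
    and irr: "irreducible_on K G"
    and pipos: "\<And>k. k \<in> K \<Longrightarrow> 0 < \<pi> k"
    and pieq: "\<And>y. y \<in> K \<Longrightarrow> \<pi> y = (\<Sum>k\<in>K. \<pi> k * G k y)"
    and bnn: "\<And>k. k \<in> K \<Longrightarrow> 0 \<le> b k"
    and bsum: "(\<Sum>k\<in>K. b k) = 1"
    and beq: "\<And>y. y \<in> K \<Longrightarrow> b y = (\<Sum>k\<in>K. b k * G k y)"
    and k: "k \<in> K"
  shows "b k = \<pi> k / (\<Sum>k\<in>K. \<pi> k)"
proof -
  define c where "c = Min ((\<lambda>k. b k / \<pi> k) ` K)"
  have "c \<in> (\<lambda>k. b k / \<pi> k) ` K" unfolding c_def by (rule Min_in) (use finK Kne in auto)
  then obtain k0 where k0: "k0 \<in> K" "c = b k0 / \<pi> k0" by blast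
  have cle: "c \<le> b k / \<pi> k" if "k \<in> K" for k
    unfolding c_def using finK that by (auto intro: Min_le)
  define e where "e k = b k - c * \<pi> k" for k
  have enn: "0 \<le> e k" if "k \<in> K" for k
    using cle[OF that] pipos[OF that] by (simp add: e_def field_simps)
  have eeq: "e y = (\<Sum>k\<in>K. e k * G k y)" if "y \<in> K" for y
    using beq[OF that] pieq[OF that]
    by (simp add: e_def left_diff_distrib sum_subtractf sum_distrib_left mult.assoc)
  have ek0: "e k0 = 0" using k0 pipos[OF k0(1)] by (simp add: e_def)
  have backw: "e a = 0" if "a \<in> K" "y \<in> K" "G a y > 0" "e y = 0" for a y
  proof -
    have "(\<Sum>k\<in>K. e k * G k y) = 0" using eeq[OF that(2)] that(4) by simp
    moreover have "((\<Sum>k\<in>K. e k * G k y) = 0) = (\<forall>k\<in>K. e k * G k y = 0)"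
      by (rule sum_nonneg_eq_0_iff[OF finK]) (use enn Gnn that(2) in simp)
    ultimately have "e a * G a y = 0" using that(1) by blast
    then show ?thesis using that(3) by simp
  qed
  define E where "E = {(a, b). a \<in> K \<and> b \<in> K \<and> G a b > 0}"
  have ezero: "e a = 0" if "a \<in> K" for a
  proof -
    have "(a, k0) \<in> E\<^sup>+" using irr that k0(1) unfolding irreducible_on_def E_def by blast
    then show ?thesis
    proof (induction rule: converse_trancl_induct)
      case (base y) then show ?case using backw ek0 k0(1) by (auto simp: E_def)
    next
      case (step y z) then show ?case using backw by (auto simp: E_def)
    qed
  qed
  have bc: "b k = c * \<pi> k" if "k \<in> K" for k using ezero[OF that] by (simp add: e_def)
  have "1 = c * (\<Sum>k\<in>K. \<pi> k)" using bsum by (simp add: bc sum_distrib_left)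
  moreover have "0 < (\<Sum>k\<in>K. \<pi> k)" using finK Kne pipos by (simp add: sum_pos)
  ultimately have "c = 1 / (\<Sum>k\<in>K. \<pi> k)" by (simp add: field_simps)
  then show ?thesis using bc[OF k] by simp
qed

lemma K_limit:
  fixes a :: "nat \<Rightarrow> 'a \<Rightarrow> real" and G :: "'a \<Rightarrow> 'a \<Rightarrow> real"
  assumes finK: "finite K" and Kne: "K \<noteq> {}"
    and ann: "\<And>n k. k \<in> K \<Longrightarrow> 0 \<le> a n k"
    and asum: "\<And>n. (\<Sum>k\<in>K. a n k) = 1"
    and aeq: "\<And>n y. y \<in> K \<Longrightarrow> a n y * U n y = (\<Sum>k\<in>K. a n k * Gn n k y)"
    and Glim: "\<And>k y. k \<in> K \<Longrightarrow> y \<in> K \<Longrightarrow> (\<lambda>n. Gn n k y) \<longlonglongrightarrow> G k y"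
    and Ulim: "\<And>y. y \<in> K \<Longrightarrow> (\<lambda>n. U n y) \<longlonglongrightarrow> 1"
    and Gnn: "\<And>k y. k \<in> K \<Longrightarrow> y \<in> K \<Longrightarrow> 0 \<le> G k y"
    and irr: "irreducible_on K G"
    and pipos: "\<And>k. k \<in> K \<Longrightarrow> 0 < \<pi> k"
    and pieq: "\<And>y. y \<in> K \<Longrightarrow> \<pi> y = (\<Sum>k\<in>K. \<pi> k * G k y)"
    and k0: "k0 \<in> K"
  shows "(\<lambda>n. a n k0) \<longlonglongrightarrow> \<pi> k0 / (\<Sum>k\<in>K. \<pi> k)"
proof (rule ccontr)
  define L where "L = \<pi> k0 / (\<Sum>k\<in>K. \<pi> k)"
  assume "\<not> (\<lambda>n. a n k0) \<longlonglongrightarrow> \<pi> k0 / (\<Sum>k\<in>K. \<pi> k)"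
  then have "\<not> (\<lambda>n. a n k0) \<longlonglongrightarrow> L" by (simp add: L_def)
  then obtain \<epsilon> where eps: "\<epsilon> > 0" "\<forall>N. \<exists>n\<ge>N. \<not> \<bar>a n k0 - L\<bar> < \<epsilon>"
  proof -
    have "\<not> (\<forall>r>0. \<exists>no. \<forall>n\<ge>no. norm (a n k0 - L) < r)"
      using \<open>\<not> (\<lambda>n. a n k0) \<longlonglongrightarrow> L\<close> LIMSEQ_iff[of "\<lambda>n. a n k0" L] by simp
    then show ?thesis using that by (auto simp: not_less)
  qed
  define S where "S = {n. \<epsilon> \<le> \<bar>a n k0 - L\<bar>}"
  have "infinite S" unfolding infinite_nat_iff_unbounded_le S_def using eps(2) by (auto simp: not_less)
  then have "\<exists>r::nat\<Rightarrow>nat. strict_mono r \<and> (\<forall>n. r n \<in> S)" by (rule infinite_enumerate)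
  then obtain r :: "nat \<Rightarrow> nat" where r0: "strict_mono r \<and> (\<forall>n. r n \<in> S)" ..
  then have r: "strict_mono r" "\<forall>n. r n \<in> S" by simp_all
  have ale1: "a n k \<le> 1" if "k \<in> K" for n k
  proof -
    have "a n k \<le> (\<Sum>k\<in>K. a n k)" by (rule member_le_sum[OF that]) (use ann finK in auto)
    then show ?thesis using asum[of n] by simp
  qed
  have "\<exists>s. strict_mono s \<and> (\<forall>k\<in>K. convergent (\<lambda>n. a (r (s n)) k))"
    by (rule finite_BW[OF finK, of "\<lambda>n. a (r n)" 1]) (use ann ale1 in auto)
  then obtain s where s: "strict_mono s" "\<forall>k\<in>K. convergent (\<lambda>n. a (r (s n)) k)" by blast
  define t where "t = r \<circ> s"
  have t: "strict_mono t" unfolding t_def by (rule strict_mono_o[OF r(1) s(1)])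
  define b where "b k = lim (\<lambda>n. a (t n) k)" for k
  have blim: "(\<lambda>n. a (t n) k) \<longlonglongrightarrow> b k" if "k \<in> K" for k
    using s(2) that unfolding b_def t_def by (simp add: convergent_LIMSEQ_iff)
  have sub: "(\<lambda>n. f (t n)) \<longlonglongrightarrow> l" if "f \<longlonglongrightarrow> l" for f :: "nat \<Rightarrow> real" and l
    using LIMSEQ_subseq_LIMSEQ[OF that t] by (simp add: o_def)
  have bnn: "0 \<le> b k" if "k \<in> K" for k
    by (rule LIMSEQ_le_const[OF blim[OF that]]) (use ann that in auto)
  have bsum: "(\<Sum>k\<in>K. b k) = 1"
  proof -
    have "(\<lambda>n. \<Sum>k\<in>K. a (t n) k) \<longlonglongrightarrow> (\<Sum>k\<in>K. b k)" by (intro tendsto_sum blim)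
    then show ?thesis using asum by (simp add: LIMSEQ_const_iff)
  qed
  have beq: "b y = (\<Sum>k\<in>K. b k * G k y)" if y: "y \<in> K" for y
  proof -
    have Ut: "(\<lambda>n. U (t n) y) \<longlonglongrightarrow> 1" using sub[OF Ulim[OF y]] .
    have l1: "(\<lambda>n. a (t n) y * U (t n) y) \<longlonglongrightarrow> b y * 1"
      by (rule tendsto_mult[OF blim[OF y] Ut])
    have Gt: "(\<lambda>n. Gn (t n) k y) \<longlonglongrightarrow> G k y" if "k \<in> K" for k using sub[OF Glim[OF that y]] .
    have l2: "(\<lambda>n. \<Sum>k\<in>K. a (t n) k * Gn (t n) k y) \<longlonglongrightarrow> (\<Sum>k\<in>K. b k * G k y)"
      by (rule tendsto_sum, rule tendsto_mult[OF blim Gt])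
    show ?thesis using LIMSEQ_unique[OF l1] l2 aeq[OF y] by simp
  qed
  have bk0: "b k0 = L"
    unfolding L_def by (rule invariant_unique[OF finK Kne Gnn irr pipos pieq bnn bsum beq k0]) auto
  have "(\<lambda>n. \<bar>a (t n) k0 - L\<bar>) \<longlonglongrightarrow> \<bar>L - L\<bar>"
    using blim[OF k0] bk0 by (intro tendsto_intros) auto
  then have "(\<lambda>n. \<bar>a (t n) k0 - L\<bar>) \<longlonglongrightarrow> 0" by simp
  moreover have "\<epsilon> \<le> \<bar>a (t n) k0 - L\<bar>" for n using r(2) by (simp add: S_def t_def)
  ultimately have "\<epsilon> \<le> 0" by (intro LIMSEQ_le_const[of _ 0]) auto
  then show False using eps(1) by simp
qed

locale seqA = chain P \<pi> K for P :: "'a::countable \<Rightarrow> 'a \<Rightarrow> real" and \<pi> K +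
  fixes A :: "nat \<Rightarrow> 'a set"
  assumes finAn: "\<And>n. finite (A n)" and KAn: "\<And>n. K \<subseteq> A n"
    and monoA: "\<And>n. A n \<subseteq> A (Suc n)" and unionA: "(\<Union>n. A n) = UNIV"
begin

lemma fin_n: "fin P \<pi> K (A n)"
  unfolding fin_def fin_axioms_def using chain_axioms finAn KAn by blast

lemma ev_in: "eventually (\<lambda>n. x \<in> A n) sequentially"
proof -
  obtain N where N: "x \<in> A N" using unionA by blast
  have "x \<in> A n" if "N \<le> n" for n
    using lift_Suc_mono_le[of A, OF monoA that] N by blast
  then show ?thesis unfolding eventually_sequentially by blast
qed

lemma taboo_lim_Suc: "(\<lambda>n. taboo P (A n - K) (Suc j) x y) \<longlonglongrightarrow> tau (Suc j) x y"
proof (induction j arbitrary: x)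
  case 0 then show ?case by simp
next
  case (Suc j)
  define f where "f n z = (if z \<in> A n then P x z * taboo P (A n - K) (Suc j) z y else 0)" for n z
  have eq: "taboo P (A n - K) (Suc (Suc j)) x y = infsum (f n) (UNIV - K)" for n
  proof -
    have "taboo P (A n - K) (Suc (Suc j)) x y = infsum (\<lambda>z. P x z * taboo P (A n - K) (Suc j) z y) (A n - K)"
      by simp
    also have "\<dots> = infsum (f n) (UNIV - K)"
      by (rule infsum_cong_neutral) (auto simp: f_def)
    finally show ?thesis .
  qed
  have "(\<lambda>n. infsum (f n) (UNIV - K)) \<longlonglongrightarrow> infsum (\<lambda>z. P x z * tau (Suc j) z y) (UNIV - K)"
  proof (rule infsum_dominated_convergence[OF P_summable])
    fix n z show "\<bar>f n z\<bar> \<le> P x z"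
      using P_nonneg[of x z] taboo_bounds[of "A n - K" "Suc j" z y]
      by (auto simp: f_def abs_mult mult_left_le)
  next
    fix z
    have "eventually (\<lambda>n. P x z * taboo P (A n - K) (Suc j) z y = f n z) sequentially"
      using ev_in[of z] by eventually_elim (simp add: f_def)
    moreover have "(\<lambda>n. P x z * taboo P (A n - K) (Suc j) z y) \<longlonglongrightarrow> P x z * tau (Suc j) z y"
      by (intro tendsto_intros Suc.IH)
    ultimately show "(\<lambda>n. f n z) \<longlonglongrightarrow> P x z * tau (Suc j) z y"
      by (rule Lim_transform_eventually[rotated])
  qed
  then show ?case by (simp only: eq) simp
qed

lemma taboo_lim: "(\<lambda>n. taboo P (A n - K) j x y) \<longlonglongrightarrow> tau j x y"
  by (cases j) (simp_all add: taboo_lim_Suc)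

lemma NA_lim:
  assumes "y \<in> K \<or> x \<in> K"
  shows "(\<lambda>n. suminf (\<lambda>j. taboo P (A n - K) j x y)) \<longlonglongrightarrow> Ninf x y"
proof -
  have summ: "summable (\<lambda>j. tau j x y)" using assms tau_toK_summable tau_fromK_summable by blast
  have "eventually (\<lambda>n. summable (\<lambda>k. norm (taboo P (A n - K) k x y))) sequentially \<and>
        summable (\<lambda>n. norm (tau n x y)) \<and>
        ((\<lambda>n. suminf (\<lambda>k. taboo P (A n - K) k x y)) \<longlonglongrightarrow> suminf (\<lambda>k. tau k x y))"
  proof (rule tannerys_theorem[where M = "\<lambda>k. tau k x y"])
    show "(\<lambda>n. taboo P (A n - K) k x y) \<longlonglongrightarrow> tau k x y" for k by (rule taboo_lim)
    show "\<forall>\<^sub>F (k, n) in at_top \<times>\<^sub>F sequentially. norm (taboo P (A n - K) k x y) \<le> tau k x y"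
      by (rule always_eventually) (auto simp: taboo_nonneg intro: taboo_mono_set)
    show "summable (\<lambda>k. tau k x y)" by (rule summ)
  qed simp
  then show ?thesis unfolding Ninf_def by blast
qed

lemma u_lim: "(\<lambda>n. uhit P K (A n) x) \<longlonglongrightarrow> 1"
proof -
  have eq: "uhit P K (A n) x = (\<Sum>k\<in>K. suminf (\<lambda>j. taboo P (A n - K) j x k))" for n
    unfolding uhit_def Gmat_def by (rule sum.cong) auto
  have "(\<lambda>n. \<Sum>k\<in>K. suminf (\<lambda>j. taboo P (A n - K) j x k)) \<longlonglongrightarrow> (\<Sum>k\<in>K. Ninf x k)"
    by (intro tendsto_sum NA_lim) simp
  then show ?thesis using Ninf_toK_sum by (simp add: eq)
qed

end

context seqA begin

lemma main:
  fixes S2 :: "nat \<Rightarrow> 'a set" and q :: "nat \<Rightarrow> 'a \<Rightarrow> real"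
  assumes irrG: "irreducible_on K (Gmat P K (A 0))"
    and KS: "\<And>n. K \<subseteq> S2 n"
    and cc: "\<And>n. closed_comm_class (Sprime P K (A n)) (Rmat P K (A n)) (S2 n)"
    and st: "\<And>n. stationary_on (S2 n) (Rmat P K (A n)) (q n)"
  shows "(\<lambda>n. q n x) \<longlonglongrightarrow> \<pi> x"
proof -
  define u where "u n y = uhit P K (A n) y" for n y
  define N where "N n k y = suminf (\<lambda>j. taboo P (A n - K) j k y)" for n k y
  define h where "h n y = (if y \<in> K then 1 else u n y)" for n y
  define w where "w n k = q n k / u n k" for n k
  define Sn where "Sn n = (\<Sum>k\<in>K. w n k)" for n
  define a where "a n k = w n k / Sn n" for n k
  define \<pi>K where "\<pi>K = (\<Sum>k\<in>K. \<pi> k)"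
  have NA_eq: "fin.NA P K (A n) k y = N n k y" for n k y
    using fin.NA_def[OF fin_n] by (simp add: N_def)
  have F1n: "q n y = h n y * (\<Sum>k\<in>K. w n k * N n k y)" if "y \<in> A n" for n y
    using fin.F1[OF fin_n cc st KS that] by (simp add: NA_eq h_def u_def w_def)
  have S2S: "S2 n \<subseteq> Sprime P K (A n)" for n using cc[of n] unfolding closed_comm_class_def by auto
  have S2A: "S2 n \<subseteq> A n" for n using S2S[of n] unfolding Sprime_def by auto
  have finS2: "finite (S2 n)" for n using S2A finAn finite_subset by blast
  have qnn: "0 \<le> q n y" for n y using st[of n] unfolding stationary_on_def by auto
  have q0: "y \<notin> S2 n \<Longrightarrow> q n y = 0" for n y using st[of n] unfolding stationary_on_def by auto
  have qsum: "(\<Sum>y\<in>S2 n. q n y) = 1" for n using st[of n] unfolding stationary_on_def by auto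
  have upos: "0 < u n k" if "k \<in> K" for n k
    using that KS[of n] S2S[of n] unfolding Sprime_def u_def by auto
  have unn: "0 \<le> u n y" for n y unfolding u_def by (rule fin.u_nonneg[OF fin_n])
  have ule: "u n y \<le> 1" for n y unfolding u_def by (rule fin.u_le1[OF fin_n])
  have Nnn: "0 \<le> N n k y" if "k \<in> K" for n k y
    using fin.NA_nonneg[OF fin_n, of y k] that by (simp add: NA_eq)
  have Nle: "N n k y \<le> Ninf k y" if "k \<in> K" for n k y
    using fin.NA_le_Ninf[OF fin_n, of y k] that by (simp add: NA_eq)
  have Ninfnn: "0 \<le> Ninf k y" if "k \<in> K" for k y
    by (rule Ninf_nonneg[OF tau_fromK_summable[OF that]])
  have wnn: "0 \<le> w n k" for n k unfolding w_def using qnn unn by (simp add: divide_nonneg_nonneg)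
  have Snpos: "0 < Sn n" for n
  proof (rule ccontr)
    assume "\<not> 0 < Sn n"
    moreover have "0 \<le> Sn n" unfolding Sn_def by (simp add: sum_nonneg wnn)
    ultimately have "Sn n = 0" by simp
    then have wz: "\<forall>k\<in>K. w n k = 0" unfolding Sn_def using sum_nonneg_eq_0_iff[OF finK] wnn by blast
    have "q n y = 0" if "y \<in> S2 n" for y
      using F1n[of y n] S2A[of n] that wz by auto
    then have "(\<Sum>y\<in>S2 n. q n y) = 0" by simp
    then show False using qsum[of n] by simp
  qed
  have ann: "0 \<le> a n k" for n k unfolding a_def using wnn Snpos by (simp add: less_le)
  have asum: "(\<Sum>k\<in>K. a n k) = 1" for n
    unfolding a_def using Snpos[of n] by (simp add: sum_divide_distrib[symmetric] Sn_def)
  have ale: "a n k \<le> 1" if "k \<in> K" for n k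
  proof -
    have "a n k \<le> (\<Sum>k\<in>K. a n k)" by (rule member_le_sum[OF that]) (use ann finK in auto)
    then show ?thesis using asum[of n] by simp
  qed
  have Gmat_N: "Gmat P K (A n) k y = N n k y" if "y \<in> K" for n k y
    using that by (simp add: Gmat_def N_def)
  have aeq: "a n y * u n y = (\<Sum>k\<in>K. a n k * Gmat P K (A n) k y)" if y: "y \<in> K" for n y
  proof -
    have "q n y = w n y * u n y" using upos[OF y, of n] by (simp add: w_def)
    moreover have "q n y = (\<Sum>k\<in>K. w n k * N n k y)" using F1n[of y n] KAn[of n] y by (auto simp: h_def)
    ultimately have "w n y * u n y = (\<Sum>k\<in>K. w n k * Gmat P K (A n) k y)" using y by (simp add: Gmat_N)
    then have "w n y * u n y / Sn n = (\<Sum>k\<in>K. w n k * Gmat P K (A n) k y) / Sn n" by simp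
    then show ?thesis unfolding a_def by (simp add: sum_divide_distrib)
  qed
  have irrN: "irreducible_on K Ninf"
    unfolding irreducible_on_def
  proof (intro ballI)
    fix k y assume k: "k \<in> K" and y: "y \<in> K"
    have sub: "{(a, b). a \<in> K \<and> b \<in> K \<and> 0 < Gmat P K (A 0) a b} \<subseteq> {(a, b). a \<in> K \<and> b \<in> K \<and> 0 < Ninf a b}"
    proof safe
      fix a b assume "a \<in> K" "b \<in> K" "0 < Gmat P K (A 0) a b"
      then show "0 < Ninf a b" using Nle[of a 0 b] Gmat_N[of b 0 a] by simp
    qed
    have "(k, y) \<in> {(a, b). a \<in> K \<and> b \<in> K \<and> 0 < Gmat P K (A 0) a b}\<^sup>+"
      using irrG k y unfolding irreducible_on_def by blast
    then show "(k, y) \<in> {(a, b). a \<in> K \<and> b \<in> K \<and> 0 < Ninf a b}\<^sup>+" using trancl_mono sub by blast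
  qed
  have alim: "(\<lambda>n. a n k) \<longlonglongrightarrow> \<pi> k / \<pi>K" if k: "k \<in> K" for k
    unfolding \<pi>K_def
  proof (rule K_limit[OF finK Kne ann asum aeq _ _ _ irrN pi_pos _ k])
    fix k' y assume "k' \<in> K" "y \<in> K"
    then show "(\<lambda>n. Gmat P K (A n) k' y) \<longlonglongrightarrow> Ninf k' y"
      using NA_lim[of y k'] by (simp add: Gmat_def)
  next
    fix y show "(\<lambda>n. u n y) \<longlonglongrightarrow> 1" unfolding u_def by (rule u_lim)
  next
    fix k' y assume k': "k' \<in> K" and "y \<in> K" show "0 \<le> Ninf k' y" by (rule Ninfnn[OF k'])
  next
    fix y show "\<pi> y = (\<Sum>k\<in>K. \<pi> k * Ninf k y)" by (rule cycle_formula)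
  qed
  define \<Psi> where "\<Psi> n y = q n y / Sn n" for n y
  define m where "m = Min (\<pi> ` K)"
  have mpos: "0 < m" unfolding m_def using finK Kne pi_pos by (subst Min_gr_iff) auto
  have mle: "m \<le> \<pi> k" if "k \<in> K" for k unfolding m_def using finK that by (auto intro: Min_le)
  have \<pi>Kpos: "0 < \<pi>K" unfolding \<pi>K_def using finK Kne pi_pos by (simp add: sum_pos)
  have Psi_eq: "\<Psi> n y = h n y * (\<Sum>k\<in>K. a n k * N n k y)" if "y \<in> A n" for n y
  proof -
    have "\<Psi> n y = h n y * ((\<Sum>k\<in>K. w n k * N n k y) / Sn n)" using F1n[OF that] by (simp add: \<Psi>_def)
    also have "\<dots> = h n y * (\<Sum>k\<in>K. a n k * N n k y)" by (simp add: a_def sum_divide_distrib)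
    finally show ?thesis .
  qed
  have Psi0: "\<Psi> n y = 0" if "y \<notin> A n" for n y
    using q0[of y n] S2A[of n] that by (auto simp: \<Psi>_def)
  have hnn: "0 \<le> h n y" and hle: "h n y \<le> 1" for n y using unn ule by (auto simp: h_def)
  have bound: "\<bar>\<Psi> n y\<bar> \<le> \<pi> y / m" for n y
  proof (cases "y \<in> A n")
    case False
    then show ?thesis using Psi0 pi_nonneg mpos by (simp add: divide_nonneg_pos)
  next
    case True
    have s0: "0 \<le> (\<Sum>k\<in>K. a n k * N n k y)" by (rule sum_nonneg) (simp add: ann Nnn)
    have "(\<Sum>k\<in>K. a n k * N n k y) \<le> (\<Sum>k\<in>K. (\<pi> k / m) * Ninf k y)"
    proof (rule sum_mono)
      fix k assume k: "k \<in> K"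
      have "a n k * N n k y \<le> 1 * Ninf k y"
        by (rule mult_mono) (use ale[OF k] Nle[OF k] ann Ninfnn[OF k] Nnn[OF k] in auto)
      also have "\<dots> \<le> (\<pi> k / m) * Ninf k y"
        by (rule mult_right_mono) (use mle[OF k] mpos Ninfnn[OF k] in auto)
      finally show "a n k * N n k y \<le> (\<pi> k / m) * Ninf k y" .
    qed
    also have "\<dots> = \<pi> y / m" using cycle_formula[of y]
      by (simp add: sum_divide_distrib[symmetric] mult.commute mult.left_commute)
    finally have s1: "(\<Sum>k\<in>K. a n k * N n k y) \<le> \<pi> y / m" .
    have "\<bar>\<Psi> n y\<bar> = h n y * (\<Sum>k\<in>K. a n k * N n k y)"
      using Psi_eq[OF True] hnn s0 by simp
    also have "\<dots> \<le> 1 * (\<Sum>k\<in>K. a n k * N n k y)"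
      by (rule mult_right_mono) (use hle s0 in auto)
    finally show ?thesis using s1 by simp
  qed
  have hlim: "(\<lambda>n. h n y) \<longlonglongrightarrow> 1" for y
    unfolding h_def u_def using u_lim by (cases "y \<in> K") auto
  have Psi_lim: "(\<lambda>n. \<Psi> n y) \<longlonglongrightarrow> \<pi> y / \<pi>K" for y
  proof -
    have "(\<lambda>n. h n y * (\<Sum>k\<in>K. a n k * N n k y)) \<longlonglongrightarrow> 1 * (\<Sum>k\<in>K. (\<pi> k / \<pi>K) * Ninf k y)"
    proof (intro tendsto_mult hlim tendsto_sum)
      fix k assume k: "k \<in> K"
      show "(\<lambda>n. N n k y) \<longlonglongrightarrow> Ninf k y" unfolding N_def using NA_lim k by blast
      show "(\<lambda>n. a n k) \<longlonglongrightarrow> \<pi> k / \<pi>K" by (rule alim[OF k])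
    qed
    also have "1 * (\<Sum>k\<in>K. (\<pi> k / \<pi>K) * Ninf k y) = \<pi> y / \<pi>K"
      using cycle_formula[of y] by (simp add: sum_divide_distrib[symmetric])
    finally have l: "(\<lambda>n. h n y * (\<Sum>k\<in>K. a n k * N n k y)) \<longlonglongrightarrow> \<pi> y / \<pi>K" .
    have "eventually (\<lambda>n. h n y * (\<Sum>k\<in>K. a n k * N n k y) = \<Psi> n y) sequentially"
      using ev_in[of y] by eventually_elim (simp add: Psi_eq)
    then show ?thesis using l by (rule Lim_transform_eventually[rotated])
  qed
  have gsum: "(\<lambda>y. \<pi> y / m) summable_on UNIV"
  proof -
    have "(\<lambda>y. \<pi> y * (1 / m)) summable_on UNIV" by (rule summable_on_cmult_left[OF pi_summable])
    then show ?thesis by simp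
  qed
  have "(\<lambda>n. infsum (\<Psi> n) UNIV) \<longlonglongrightarrow> infsum (\<lambda>y. \<pi> y / \<pi>K) UNIV"
    by (rule infsum_dominated_convergence[OF gsum bound Psi_lim])
  moreover have "infsum (\<lambda>y. \<pi> y / \<pi>K) UNIV = 1 / \<pi>K"
  proof -
    have "infsum (\<lambda>y. \<pi> y * (1 / \<pi>K)) UNIV = infsum \<pi> UNIV * (1 / \<pi>K)"
      by (rule infsum_cmult_left')
    then show ?thesis using pi_has_sum infsumI by fastforce
  qed
  moreover have "infsum (\<Psi> n) UNIV = 1 / Sn n" for n
  proof -
    have "infsum (\<Psi> n) UNIV = infsum (\<Psi> n) (S2 n)"
      by (rule infsum_cong_neutral) (auto simp: \<Psi>_def q0)
    also have "\<dots> = (\<Sum>y\<in>S2 n. q n y) / Sn n"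
      using finS2[of n] by (simp add: \<Psi>_def sum_divide_distrib)
    finally show ?thesis using qsum[of n] by simp
  qed
  ultimately have "(\<lambda>n. 1 / Sn n) \<longlonglongrightarrow> 1 / \<pi>K" by simp
  then have "(\<lambda>n. inverse (1 / Sn n)) \<longlonglongrightarrow> inverse (1 / \<pi>K)"
    by (rule tendsto_inverse) (use \<pi>Kpos in simp)
  then have Snlim: "Sn \<longlonglongrightarrow> \<pi>K" by (simp add: inverse_eq_divide)
  have "(\<lambda>n. Sn n * \<Psi> n x) \<longlonglongrightarrow> \<pi>K * (\<pi> x / \<pi>K)"
    by (intro tendsto_mult Snlim Psi_lim)
  moreover have "Sn n * \<Psi> n x = q n x" for n using Snpos[of n] by (simp add: \<Psi>_def)
  ultimately show ?thesis using \<pi>Kpos by simp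
qed

end

theorem theorem5p2:
  fixes P :: "'a::countable \<Rightarrow> 'a \<Rightarrow> real"
    and \<pi> :: "'a \<Rightarrow> real"
    and K :: "'a set"
    and A :: "nat \<Rightarrow> 'a set"
    and S2 :: "nat \<Rightarrow> 'a set"
    and \<pi>3 :: "nat \<Rightarrow> 'a \<Rightarrow> real"
  assumes "stochastic P"
    and "irreducible_chain P"
    and "positive_recurrent P"
    and "stationary_distribution P \<pi>"
    and "finite K" and "K \<noteq> {}"
    and "\<And>n. finite (A n)"
    and "\<And>n. K \<subseteq> A n"
    and "\<And>n. A n \<subseteq> A (Suc n)"
    and "(\<Union>n. A n) = UNIV"
    and "\<And>n. irreducible_on K (Gmat P K (A n))"
    and "\<And>n. K \<subseteq> S2 n"
    and "\<And>n. closed_comm_class (Sprime P K (A n)) (Rmat P K (A n)) (S2 n)"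
    and "\<And>n. stationary_on (S2 n) (Rmat P K (A n)) (\<pi>3 n)"
  shows "\<And>x. (\<lambda>n. \<pi>3 n x) \<longlonglongrightarrow> \<pi> x"
proof -
  have mcP: "mc P" using assms(1) by (rule mc.intro)
  have chP: "chain P \<pi> K"
    by (rule chain.intro[OF mcP]) (unfold chain_axioms_def, use assms in auto)
  have sqA: "seqA P \<pi> K A"
    by (rule seqA.intro[OF chP]) (unfold seqA_axioms_def, use assms in auto)
  fix x
  show "(\<lambda>n. \<pi>3 n x) \<longlonglongrightarrow> \<pi> x"
    by (rule seqA.main[OF sqA assms(11)[of 0] assms(12) assms(13) assms(14)])
qed

end
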